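(* Let $m,k,n$ be natural numbers with $n\ge k+1$, and let $V_0,\ldots,V_{m-1}$ be $G$-representations over $K$. Then a tensor $\omega\in V_{[m]}$ has rank (respectively, border rank) at most $k$ if and only if for all $m$-tuples of $G$-linear maps $\phi_i:V_i\to K[G]^n$ ($i\in[m]$) the tensor $\phi_{[m]}(\omega)$ has rank (respectively, border rank) at most $k$. Moreover, if $\omega\in V_{[m]}$ has border rank at most $k$, then there exist $m$-tuples of $G$-linear maps $\phi_i:V_i\to K[G]^k$ and $\psi_i:K[G]^k\to V_i$ such that $\psi_{[m]}(\phi_{[m]}(\omega))=\omega$.
   Context: $G$ is a finite Abelian group; $K$ is an infinite field such that every finite-dimensional $G$-representation over $K$ is a direct sum of one-dimensional irreducible representations; $G$-representations are finite-dimensional. $K[G]$ denotes the regular representation of $G$. $[m]=\{0,\ldots,m-1\}$ and $V_{[m]}=\bigotimes_{i\in[m]}V_i$. For linear maps $\phi_i:V_i\to U_i$, $\phi_{[m]}=\bigotimes_i\phi_i:V_{[m]}\to U_{[m]}$ sends $\bigotimes_i v_i\mapsto\bigotimes_i\phi_i(v_i)$. The rank of a tensor is the minimal number of pure tensors summing to it; border rank at most $k$ means lying in the Zariski closure of the set of tensors of rank at most $k$. *)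

theory Defs
  imports "HOL-Algebra.Group" "HOL-Library.FuncSet"
begin

text \<open>A finite-dimensional vector space is K^I for a finite
 coordinate set I; a tensor in V_[m] = (x)_{i<m} K^{I i} is a function on index tuples
 in PiE {..<m} I, vanishing outside.\<close>

definition tidx :: "nat \<Rightarrow> (nat \<Rightarrow> 'a set) \<Rightarrow> (nat \<Rightarrow> 'a) set" where
  "tidx m I = PiE {..<m} I"

definition tensor_space :: "nat \<Rightarrow> (nat \<Rightarrow> 'a set) \<Rightarrow> ((nat \<Rightarrow> 'a) \<Rightarrow> 'k::field) set" where
  "tensor_space m I = {\<omega>. \<forall>j. j \<notin> tidx m I \<longrightarrow> \<omega> j = 0}"

definition pure_tensor :: "nat \<Rightarrow> (nat \<Rightarrow> 'a set) \<Rightarrow> (nat \<Rightarrow> 'a \<Rightarrow> 'k::field) \<Rightarrow> (nat \<Rightarrow> 'a) \<Rightarrow> 'k" where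
  "pure_tensor m I v = (\<lambda>j. if j \<in> tidx m I then (\<Prod>i<m. v i (j i)) else 0)"

definition rank_le :: "nat \<Rightarrow> (nat \<Rightarrow> 'a set) \<Rightarrow> nat \<Rightarrow> ((nat \<Rightarrow> 'a) \<Rightarrow> 'k::field) \<Rightarrow> bool" where
  "rank_le m I k \<omega> = (\<exists>v :: nat \<Rightarrow> nat \<Rightarrow> 'a \<Rightarrow> 'k. \<omega> = (\<lambda>j. \<Sum>r<k. pure_tensor m I (v r) j))"

inductive_set poly_fun :: "(('x \<Rightarrow> 'k::field) \<Rightarrow> 'k) set" where
  pf_const: "(\<lambda>_. c) \<in> poly_fun"
| pf_var: "(\<lambda>x. x j) \<in> poly_fun"
| pf_add: "p \<in> poly_fun \<Longrightarrow> q \<in> poly_fun \<Longrightarrow> (\<lambda>x. p x + q x) \<in> poly_fun"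
| pf_mult: "p \<in> poly_fun \<Longrightarrow> q \<in> poly_fun \<Longrightarrow> (\<lambda>x. p x * q x) \<in> poly_fun"

definition zariski_closure :: "(('x \<Rightarrow> 'k::field) set) \<Rightarrow> ('x \<Rightarrow> 'k) set" where
  "zariski_closure S = {x. \<forall>p\<in>poly_fun. (\<forall>s\<in>S. p s = 0) \<longrightarrow> p x = 0}"

definition border_rank_le :: "nat \<Rightarrow> (nat \<Rightarrow> 'a set) \<Rightarrow> nat \<Rightarrow> ((nat \<Rightarrow> 'a) \<Rightarrow> 'k::field) \<Rightarrow> bool" where
  "border_rank_le m I k \<omega> = (\<omega> \<in> zariski_closure {\<tau>. rank_le m I k \<tau>})"

text \<open>phi_[m]: phi i is the matrix of a linear map K^{I i} -> K^{J i}; phi i b a is the entry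
  at target coordinate b, source coordinate a.\<close>
definition tensor_map :: "nat \<Rightarrow> (nat \<Rightarrow> 'a set) \<Rightarrow> (nat \<Rightarrow> 'b set) \<Rightarrow> (nat \<Rightarrow> 'b \<Rightarrow> 'a \<Rightarrow> 'k::field)
     \<Rightarrow> ((nat \<Rightarrow> 'a) \<Rightarrow> 'k) \<Rightarrow> (nat \<Rightarrow> 'b) \<Rightarrow> 'k" where
  "tensor_map m I J \<phi> \<omega> = (\<lambda>j'. if j' \<in> tidx m J
      then (\<Sum>j\<in>tidx m I. (\<Prod>i<m. \<phi> i (j' i) (j i)) * \<omega> j) else 0)"

definition is_rep :: "('g, 'c) monoid_scheme \<Rightarrow> 'a set \<Rightarrow> ('g \<Rightarrow> 'a \<Rightarrow> 'a \<Rightarrow> 'k::field) \<Rightarrow> bool" where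
  "is_rep G I \<rho> \<longleftrightarrow> finite I \<and>
     (\<forall>a\<in>I. \<forall>b\<in>I. \<rho> \<one>\<^bsub>G\<^esub> a b = (if a = b then 1 else 0)) \<and>
     (\<forall>g\<in>carrier G. \<forall>h\<in>carrier G. \<forall>a\<in>I. \<forall>b\<in>I.
        \<rho> (g \<otimes>\<^bsub>G\<^esub> h) a b = (\<Sum>c\<in>I. \<rho> g a c * \<rho> h c b))"

text \<open>G-linear map K^I -> K^J (matrix f, f b a) intertwining rho and sigma\<close>
definition glin :: "('g, 'c) monoid_scheme \<Rightarrow> 'a set \<Rightarrow> ('g \<Rightarrow> 'a \<Rightarrow> 'a \<Rightarrow> 'k::field)
     \<Rightarrow> 'b set \<Rightarrow> ('g \<Rightarrow> 'b \<Rightarrow> 'b \<Rightarrow> 'k) \<Rightarrow> ('b \<Rightarrow> 'a \<Rightarrow> 'k) \<Rightarrow> bool" where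
  "glin G I \<rho> J \<sigma> f \<longleftrightarrow> (\<forall>g\<in>carrier G. \<forall>b\<in>J. \<forall>a\<in>I.
      (\<Sum>c\<in>J. \<sigma> g b c * f c a) = (\<Sum>c\<in>I. f b c * \<rho> g c a))"

text \<open>K[G]^n: coordinates G x {0..n-1}, g acts by e_(h,a) |-> e_(g h, a)\<close>
definition reg_idx :: "('g, 'c) monoid_scheme \<Rightarrow> nat \<Rightarrow> ('g \<times> nat) set" where
  "reg_idx G n = carrier G \<times> {..<n}"

definition reg_rep :: "('g, 'c) monoid_scheme \<Rightarrow> 'g \<Rightarrow> ('g \<times> nat) \<Rightarrow> ('g \<times> nat) \<Rightarrow> 'k::field" where
  "reg_rep G g x y = (if fst x = g \<otimes>\<^bsub>G\<^esub> fst y \<and> snd x = snd y then 1 else 0)"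

text \<open>K^{0..d-1} with rep rho is a direct sum of one-dimensional subrepresentations:
  there is a basis (columns of invertible P) of common eigenvectors.\<close>
definition splits_into_lines :: "('g, 'c) monoid_scheme \<Rightarrow> nat \<Rightarrow> ('g \<Rightarrow> nat \<Rightarrow> nat \<Rightarrow> 'k::field) \<Rightarrow> bool" where
  "splits_into_lines G d \<rho> \<longleftrightarrow> (\<exists>P Q :: nat \<Rightarrow> nat \<Rightarrow> 'k. \<exists>\<chi> :: nat \<Rightarrow> 'g \<Rightarrow> 'k.
     (\<forall>a<d. \<forall>b<d. (\<Sum>c<d. P a c * Q c b) = (if a = b then 1 else 0)) \<and>
     (\<forall>a<d. \<forall>b<d. (\<Sum>c<d. Q a c * P c b) = (if a = b then 1 else 0)) \<and>
     (\<forall>g\<in>carrier G. \<forall>a<d. \<forall>r<d. (\<Sum>c<d. \<rho> g a c * P c r) = \<chi> r g * P a r))"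

end

theory Submission
  imports Defs "Jordan_Normal_Form.Determinant"
begin


lemma pf_sum:
  assumes "finite A" "\<And>a. a \<in> A \<Longrightarrow> f a \<in> poly_fun"
  shows "(\<lambda>x. \<Sum>a\<in>A. f a x) \<in> poly_fun"
  using assms
proof (induction A rule: finite_induct)
  case empty
  then show ?case using pf_const[of 0] by simp
next
  case (insert a A)
  then show ?case by (simp add: pf_add)
qed

lemma pf_prod:
  assumes "finite A" "\<And>a. a \<in> A \<Longrightarrow> f a \<in> poly_fun"
  shows "(\<lambda>x. \<Prod>a\<in>A. f a x) \<in> poly_fun"
  using assms
proof (induction A rule: finite_induct)
  case empty
  then show ?case using pf_const[of 1] by simp
next
  case (insert a A)
  then show ?case by (simp add: pf_mult)
qed

lemma pf_lin:
  assumes "p \<in> poly_fun" "finite F"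
  shows "(\<lambda>\<tau>. p (\<lambda>x. \<Sum>j\<in>F. c x j * \<tau> j)) \<in> poly_fun"
  using assms(1)
proof (induction p rule: poly_fun.induct)
  case (pf_const c)
  then show ?case by (rule poly_fun.pf_const)
next
  case (pf_var j)
  show ?case
    by (rule pf_sum[OF assms(2)], rule poly_fun.pf_mult, rule poly_fun.pf_const, rule poly_fun.pf_var)
next
  case (pf_add p q)
  then show ?case by (simp add: poly_fun.pf_add)
next
  case (pf_mult p q)
  then show ?case by (simp add: poly_fun.pf_mult)
qed

lemma finite_tidx: "(\<forall>i<m. finite (I i)) \<Longrightarrow> finite (tidx m I)"
  unfolding tidx_def by (rule finite_PiE) auto

lemma tm_lin_form:
  "tensor_map m I J \<phi> \<tau> = (\<lambda>x. \<Sum>j\<in>tidx m I. (if x \<in> tidx m J then (\<Prod>i<m. \<phi> i (x i) (j i)) else 0) * \<tau> j)"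
  unfolding tensor_map_def by (rule ext) auto

lemma prod_ind:
  assumes "finite A"
  shows "(\<Prod>i\<in>A. if P i then 1 else (0::'k::comm_semiring_1)) = (if \<forall>i\<in>A. P i then 1 else 0)"
  using assms by (induction A rule: finite_induct) auto

lemma tm_pure:
  assumes fin: "\<forall>i<m. finite (I i)" and x: "x \<in> tidx m J"
  shows "tensor_map m I J \<phi> (pure_tensor m I v) x =
         (\<Prod>i<m. \<Sum>a\<in>I i. \<phi> i (x i) a * v i a)"
proof -
  have "tensor_map m I J \<phi> (pure_tensor m I v) x =
        (\<Sum>j\<in>tidx m I. (\<Prod>i<m. \<phi> i (x i) (j i)) * (\<Prod>i<m. v i (j i)))"
    using x unfolding tensor_map_def pure_tensor_def by (auto intro: sum.cong)
  also have "\<dots> = (\<Sum>j\<in>tidx m I. (\<Prod>i<m. \<phi> i (x i) (j i) * v i (j i)))"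
    by (simp add: prod.distrib)
  also have "\<dots> = (\<Prod>i<m. \<Sum>a\<in>I i. \<phi> i (x i) a * v i a)"
    unfolding tidx_def by (rule prod_sum_PiE[symmetric]) (use fin in auto)
  finally show ?thesis .
qed

lemma rank_mono:
  assumes fin: "\<forall>i<m. finite (I i)" and r: "rank_le m I k \<omega>"
  shows "rank_le m J k (tensor_map m I J \<phi> \<omega>)"
proof -
  obtain v where v: "\<omega> = (\<lambda>j. \<Sum>r<k. pure_tensor m I (v r) j)"
    using r unfolding rank_le_def by blast
  have "tensor_map m I J \<phi> \<omega> = (\<lambda>x. \<Sum>r<k. pure_tensor m J (\<lambda>i b. \<Sum>a\<in>I i. \<phi> i b a * v r i a) x)"
  proof
    fix x
    show "tensor_map m I J \<phi> \<omega> x = (\<Sum>r<k. pure_tensor m J (\<lambda>i b. \<Sum>a\<in>I i. \<phi> i b a * v r i a) x)"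
    proof (cases "x \<in> tidx m J")
      case True
      have "tensor_map m I J \<phi> \<omega> x = (\<Sum>r<k. tensor_map m I J \<phi> (pure_tensor m I (v r)) x)"
        unfolding v tensor_map_def using True
        by (simp add: sum_distrib_left sum.swap[of _ "tidx m I"])
      also have "\<dots> = (\<Sum>r<k. pure_tensor m J (\<lambda>i b. \<Sum>a\<in>I i. \<phi> i b a * v r i a) x)"
        using True by (simp add: tm_pure[OF fin True] pure_tensor_def[of m J])
      finally show ?thesis .
    next
      case False
      then show ?thesis unfolding tensor_map_def pure_tensor_def by simp
    qed
  qed
  then show ?thesis unfolding rank_le_def by (rule exI[where x="\<lambda>r i b. \<Sum>a\<in>I i. \<phi> i b a * v r i a"])
qed

lemma border_mono:
  fixes \<omega> :: "(nat \<Rightarrow> 'b) \<Rightarrow> 'k::field" and \<phi> :: "nat \<Rightarrow> 'c \<Rightarrow> 'b \<Rightarrow> 'k"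
  assumes fin: "\<forall>i<m. finite (I i)" and b: "border_rank_le m I k \<omega>"
  shows "border_rank_le m J k (tensor_map m I J \<phi> \<omega>)"
  unfolding border_rank_le_def zariski_closure_def
proof (intro CollectI ballI impI)
  fix p :: "((nat \<Rightarrow> 'c) \<Rightarrow> 'k) \<Rightarrow> 'k"
  assume p: "p \<in> poly_fun" and van: "\<forall>s\<in>{\<tau>. rank_le m J k \<tau>}. p s = 0"
  let ?q = "\<lambda>\<tau>. p (tensor_map m I J \<phi> \<tau>)"
  have "?q \<in> poly_fun"
    unfolding tm_lin_form by (rule pf_lin[OF p finite_tidx[OF fin]])
  moreover have "\<forall>s\<in>{\<tau>. rank_le m I k \<tau>}. ?q s = 0"
  proof
    fix s :: "(nat \<Rightarrow> 'b) \<Rightarrow> 'k" assume "s \<in> {\<tau>. rank_le m I k \<tau>}"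
    then have "rank_le m I k s" by simp
    from rank_mono[OF fin this] have "tensor_map m I J \<phi> s \<in> {\<tau>. rank_le m J k \<tau>}" by simp
    then show "?q s = 0" by (rule bspec[OF van])
  qed
  moreover have "\<forall>p\<in>poly_fun. (\<forall>s\<in>{\<tau>. rank_le m I k \<tau>}. p s = 0) \<longrightarrow> p \<omega> = 0"
    using b unfolding border_rank_le_def zariski_closure_def by (rule CollectD)
  ultimately show "?q \<omega> = 0" by (meson bspec mp)
qed

lemma rank_border: "rank_le m I k \<omega> \<Longrightarrow> border_rank_le m I k \<omega>"
  unfolding border_rank_le_def zariski_closure_def by auto

lemma tm_cong:
  assumes "\<forall>i<m. \<forall>b\<in>J i. \<forall>a\<in>I i. \<phi> i b a = \<phi>' i b a"
  shows "tensor_map m I J \<phi> = tensor_map m I J \<phi>'"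
proof -
  have "\<And>x j. x \<in> tidx m J \<Longrightarrow> j \<in> tidx m I \<Longrightarrow> (\<Prod>i<m. \<phi> i (x i) (j i)) = (\<Prod>i<m. \<phi>' i (x i) (j i))"
    using assms unfolding tidx_def by (auto intro!: prod.cong simp: PiE_iff)
  then show ?thesis unfolding tensor_map_def by (auto intro!: ext sum.cong)
qed

lemma tm_comp:
  assumes finI: "\<forall>i<m. finite (I i)" and finJ: "\<forall>i<m. finite (J i)"
  shows "tensor_map m J L \<psi> (tensor_map m I J \<phi> \<omega>) =
         tensor_map m I L (\<lambda>i b a. \<Sum>c\<in>J i. \<psi> i b c * \<phi> i c a) \<omega>"
proof
  fix x
  show "tensor_map m J L \<psi> (tensor_map m I J \<phi> \<omega>) x =
         tensor_map m I L (\<lambda>i b a. \<Sum>c\<in>J i. \<psi> i b c * \<phi> i c a) \<omega> x"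
  proof (cases "x \<in> tidx m L")
    case True
    have "tensor_map m J L \<psi> (tensor_map m I J \<phi> \<omega>) x =
      (\<Sum>j'\<in>tidx m J. (\<Prod>i<m. \<psi> i (x i) (j' i)) * (\<Sum>j\<in>tidx m I. (\<Prod>i<m. \<phi> i (j' i) (j i)) * \<omega> j))"
      using True unfolding tensor_map_def by (auto intro!: sum.cong)
    also have "\<dots> = (\<Sum>j\<in>tidx m I. (\<Sum>j'\<in>tidx m J. (\<Prod>i<m. \<psi> i (x i) (j' i) * \<phi> i (j' i) (j i))) * \<omega> j)"
      by (simp add: sum_distrib_left sum_distrib_right sum.swap[of _ "tidx m J"] prod.distrib mult.assoc)
    also have "\<dots> = (\<Sum>j\<in>tidx m I. (\<Prod>i<m. \<Sum>c\<in>J i. \<psi> i (x i) c * \<phi> i c (j i)) * \<omega> j)"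
      unfolding tidx_def by (subst prod_sum_PiE) (use finJ in auto)
    also have "\<dots> = tensor_map m I L (\<lambda>i b a. \<Sum>c\<in>J i. \<psi> i b c * \<phi> i c a) \<omega> x"
      using True unfolding tensor_map_def by simp
    finally show ?thesis .
  next
    case False
    then show ?thesis unfolding tensor_map_def by simp
  qed
qed



abbreviation "delta \<equiv> (\<lambda>b a. if b = a then 1 else 0)"

lemma delta_left:
  fixes X :: "'b \<Rightarrow> 'k::comm_semiring_1"
  assumes "finite A" "b \<in> A"
  shows "(\<Sum>c\<in>A. (if b = c then 1 else 0) * X c) = X b"
proof -
  have "(\<Sum>c\<in>A. (if b = c then 1 else 0) * X c) = (\<Sum>c\<in>A. if b = c then X c else 0)"
    by (rule sum.cong) auto
  then show ?thesis using assms by simp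
qed

lemma sum_if_subset:
  assumes "finite T" "S \<subseteq> T"
  shows "(\<Sum>j\<in>T. if j \<in> S then g j else 0) = sum g S"
  using sum.inter_restrict[OF assms(1), of g S, symmetric] Int_absorb1[OF assms(2)] by simp

lemma delta_left':
  fixes X :: "'b \<Rightarrow> 'k::comm_semiring_1"
  assumes "finite A" "b \<in> A"
  shows "(\<Sum>c\<in>A. (if c = b then 1 else 0) * X c) = X b"
proof -
  have "(\<Sum>c\<in>A. (if c = b then 1 else 0) * X c) = (\<Sum>c\<in>A. if b = c then X c else 0)"
    by (rule sum.cong) auto
  then show ?thesis using assms by simp
qed

lemma delta_right:
  fixes X :: "'b \<Rightarrow> 'k::comm_semiring_1"
  assumes "finite A" "a \<in> A"
  shows "(\<Sum>c\<in>A. X c * (if c = a then 1 else 0)) = X a"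
proof -
  have "(\<Sum>c\<in>A. X c * (if c = a then 1 else 0)) = (\<Sum>c\<in>A. if a = c then X c else 0)"
    by (rule sum.cong) auto
  then show ?thesis using assms by simp
qed

lemma tm_id:
  fixes \<omega> :: "(nat \<Rightarrow> 'b) \<Rightarrow> 'k::field"
  assumes fin: "\<forall>i<m. finite (I i)" and w: "\<omega> \<in> tensor_space m I"
  shows "tensor_map m I I (\<lambda>i. delta) \<omega> = \<omega>"
proof
  fix x
  show "tensor_map m I I (\<lambda>i. delta) \<omega> x = \<omega> x"
  proof (cases "x \<in> tidx m I")
    case True
    have "\<And>j. j \<in> tidx m I \<Longrightarrow> (\<Prod>i<m. if x i = j i then 1 else 0) = (if j = x then (1::'k) else 0)"
    proof -
      fix j assume j: "j \<in> tidx m I"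
      have "(\<Prod>i<m. if x i = j i then 1 else 0) = (if \<forall>i\<in>{..<m}. x i = j i then (1::'k) else 0)"
        by (rule prod_ind) simp
      also have "(\<forall>i\<in>{..<m}. x i = j i) \<longleftrightarrow> j = x"
      proof
        assume a: "\<forall>i\<in>{..<m}. x i = j i"
        show "j = x"
        proof (rule ext)
          fix i show "j i = x i" using a j True unfolding tidx_def by (cases "i < m") (auto simp: PiE_iff extensional_def)
        qed
      qed auto
      finally show "(\<Prod>i<m. if x i = j i then 1 else 0) = (if j = x then (1::'k) else 0)" by simp
    qed
    then have "tensor_map m I I (\<lambda>i. delta) \<omega> x = (\<Sum>j\<in>tidx m I. (if j = x then 1 else 0) * \<omega> j)"
      using True unfolding tensor_map_def by (auto intro!: sum.cong)
    also have "\<dots> = \<omega> x" by (rule delta_left'[OF finite_tidx[OF fin] True])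
    finally show ?thesis .
  next
    case False
    then show ?thesis using w unfolding tensor_map_def tensor_space_def by simp
  qed
qed

lemma collapse:
  fixes f :: "'b \<Rightarrow> 'k::field"
  assumes fin: "\<forall>i<m. finite (I i)" and l: "l < m" and j0: "j0 \<in> tidx m I"
  shows "(\<Sum>j\<in>tidx m I. (\<Prod>i<m. if i = l then f (j i) else (if j i = j0 i then 1 else 0)) * h j)
         = (\<Sum>y\<in>I l. f y * h (j0(l:=y)))"
proof -
  let ?S = "(\<lambda>y. j0(l:=y)) ` I l"
  have prodeq: "(\<Prod>i<m. if i = l then f (j i) else (if j i = j0 i then 1 else 0))
      = (if j \<in> ?S then f (j l) else 0)" if j: "j \<in> tidx m I" for j
  proof -
    have "(\<Prod>i<m. if i = l then f (j i) else (if j i = j0 i then 1 else 0))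
       = f (j l) * (\<Prod>i\<in>{..<m}-{l}. if i = l then f (j i) else (if j i = j0 i then 1 else 0))"
      using l by (subst prod.remove[of _ l]) auto
    also have "(\<Prod>i\<in>{..<m}-{l}. if i = l then f (j i) else (if j i = j0 i then 1 else 0))
       = (\<Prod>i\<in>{..<m}-{l}. if j i = j0 i then 1 else 0)"
      by (rule prod.cong) auto
    also have "\<dots> = (if \<forall>i\<in>{..<m}-{l}. j i = j0 i then 1 else 0)"
      by (rule prod_ind) simp
    also have "(\<forall>i\<in>{..<m}-{l}. j i = j0 i) \<longleftrightarrow> j \<in> ?S"
    proof
      assume a: "\<forall>i\<in>{..<m}-{l}. j i = j0 i"
      have "j = j0(l := j l)"
      proof (rule ext)
        fix i show "j i = (j0(l := j l)) i"
          using a j j0 unfolding tidx_def by (cases "i < m"; cases "i = l") (auto simp: PiE_iff extensional_def)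
      qed
      moreover have "j l \<in> I l" using j l unfolding tidx_def by auto
      ultimately show "j \<in> ?S" by blast
    next
      assume "j \<in> ?S" then show "\<forall>i\<in>{..<m}-{l}. j i = j0 i" by (auto split: if_splits)
    qed
    finally show ?thesis by simp
  qed
  have sub: "?S \<subseteq> tidx m I"
    using j0 l unfolding tidx_def by (auto simp: PiE_iff extensional_def split: if_splits)
  have "(\<Sum>j\<in>tidx m I. (\<Prod>i<m. if i = l then f (j i) else (if j i = j0 i then 1 else 0)) * h j)
      = (\<Sum>j\<in>tidx m I. (if j \<in> ?S then f (j l) * h j else 0))"
    by (rule sum.cong) (auto simp: prodeq)
  also have "\<dots> = (\<Sum>j\<in>?S. f (j l) * h j)"
    by (rule sum_if_subset[OF finite_tidx[OF fin] sub])
  also have "\<dots> = (\<Sum>y\<in>I l. f y * h (j0(l:=y)))"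
    by (subst sum.reindex) (auto simp: inj_on_def fun_eq_iff dest: fun_cong[where x=l])
  finally show ?thesis .
qed

lemma tm_single:
  fixes E :: "'b \<Rightarrow> 'b \<Rightarrow> 'k::field"
  assumes fin: "\<forall>i<m. finite (I i)" and l: "l < m" and x: "x \<in> tidx m I"
  shows "tensor_map m I I (\<lambda>i. if i = l then E else delta) \<omega> x = (\<Sum>y\<in>I l. E (x l) y * \<omega> (x(l:=y)))"
proof -
  have "tensor_map m I I (\<lambda>i. if i = l then E else delta) \<omega> x =
     (\<Sum>j\<in>tidx m I. (\<Prod>i<m. if i = l then E (x l) (j i) else (if j i = x i then 1 else 0)) * \<omega> j)"
    using x unfolding tensor_map_def by (auto intro!: sum.cong prod.cong)
  also have "\<dots> = (\<Sum>y\<in>I l. E (x l) y * \<omega> (x(l:=y)))"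
    by (rule collapse[OF fin l x])
  finally show ?thesis .
qed

lemma tm_fix:
  fixes E :: "nat \<Rightarrow> 'b \<Rightarrow> 'b \<Rightarrow> 'k::field"
  assumes fin: "\<forall>i<m. finite (I i)" and w: "\<omega> \<in> tensor_space m I"
    and fx: "\<forall>l<m. tensor_map m I I (\<lambda>i. if i = l then E l else delta) \<omega> = \<omega>"
  shows "tensor_map m I I E \<omega> = \<omega>"
proof -
  have main: "p \<le> m \<Longrightarrow> tensor_map m I I (\<lambda>i. if i < p then E i else delta) \<omega> = \<omega>" for p
  proof (induction p)
    case 0
    then show ?case using tm_id[OF fin w] by simp
  next
    case (Suc p)
    let ?Ep = "\<lambda>i. if i < p then E i else delta"
    let ?D = "\<lambda>i. if i = p then E p else delta"
    have "tensor_map m I I (\<lambda>i. if i < Suc p then E i else delta)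
        = tensor_map m I I (\<lambda>i b a. \<Sum>c\<in>I i. ?Ep i b c * ?D i c a)"
    proof (rule tm_cong, intro allI impI ballI)
      fix i b a assume i: "i < m" and b: "b \<in> I i" and a: "a \<in> I i"
      have fi: "finite (I i)" using fin i by auto
      show "(if i < Suc p then E i else delta) b a = (\<Sum>c\<in>I i. ?Ep i b c * ?D i c a)"
      proof (cases "i < p")
        case True
        then show ?thesis using delta_right[OF fi a, of "E i b"] by simp
      next
        case False
        show ?thesis
        proof (cases "i = p")
          case True
          have "(\<Sum>c\<in>I i. ?Ep i b c * ?D i c a) = (\<Sum>c\<in>I i. (if b = c then 1 else 0) * E p c a)"
            using True by (intro sum.cong) auto
          also have "\<dots> = E p b a" using delta_left[OF fi b, of "\<lambda>c. E p c a"] .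
          finally show ?thesis using True by simp
        next
          case ip: False
          have "(\<Sum>c\<in>I i. ?Ep i b c * ?D i c a) = (\<Sum>c\<in>I i. (if b = c then 1 else 0) * (if c = a then 1 else 0))"
            using ip False by (intro sum.cong) auto
          also have "\<dots> = (if b = a then 1 else 0)" using delta_left[OF fi b, of "\<lambda>c. if c = a then 1 else 0"] .
          finally show ?thesis using ip False by simp
        qed
      qed
    qed
    then have "tensor_map m I I (\<lambda>i. if i < Suc p then E i else delta) \<omega>
        = tensor_map m I I (\<lambda>i b a. \<Sum>c\<in>I i. ?Ep i b c * ?D i c a) \<omega>" by simp
    also have "\<dots> = tensor_map m I I ?Ep (tensor_map m I I ?D \<omega>)"
      by (rule tm_comp[symmetric]) (use fin in auto)
    also have "tensor_map m I I ?D \<omega> = \<omega>" using fx Suc by auto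
    finally show ?case using Suc by simp
  qed
  have eq: "tensor_map m I I (\<lambda>i. if i < m then E i else delta) = tensor_map m I I E"
    by (rule tm_cong) simp
  show ?thesis using main[of m] unfolding eq by simp
qed



definition mrank_le :: "nat \<Rightarrow> 'r set \<Rightarrow> 'c set \<Rightarrow> ('r \<Rightarrow> 'c \<Rightarrow> 'k::field) \<Rightarrow> bool" where
  "mrank_le k R C M \<longleftrightarrow> (\<exists>A Cm. \<forall>r\<in>R. \<forall>c\<in>C. M r c = (\<Sum>s<k. A r s * (\<Sum>r'\<in>R. Cm s r' * M r' c)))"

lemma mrank_mono:
  assumes "mrank_le k R C M" "k \<le> k'"
  shows "mrank_le k' R C M"
proof -
  obtain A Cm where AC: "\<forall>r\<in>R. \<forall>c\<in>C. M r c = (\<Sum>s<k. A r s * (\<Sum>r'\<in>R. Cm s r' * M r' c))"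
    using assms(1) unfolding mrank_le_def by blast
  let ?A = "\<lambda>r s. if s < k then A r s else 0"
  have H: "\<forall>r\<in>R. \<forall>c\<in>C. M r c = (\<Sum>s<k'. ?A r s * (\<Sum>r'\<in>R. Cm s r' * M r' c))"
  proof (intro ballI)
    fix r c assume r: "r \<in> R" and c: "c \<in> C"
    have "(\<Sum>s<k'. ?A r s * (\<Sum>r'\<in>R. Cm s r' * M r' c)) = (\<Sum>s<k. A r s * (\<Sum>r'\<in>R. Cm s r' * M r' c))"
      by (rule sum.mono_neutral_cong_right) (use assms(2) in auto)
    then show "M r c = (\<Sum>s<k'. ?A r s * (\<Sum>r'\<in>R. Cm s r' * M r' c))" using AC r c by simp
  qed
  show ?thesis unfolding mrank_le_def by (rule exI[where x="?A"], rule exI[where x=Cm], rule H)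
qed

lemma dich:
  fixes M :: "'r \<Rightarrow> 'c \<Rightarrow> 'k::field"
  assumes finR: "finite R"
  shows "mrank_le k R C M \<or> (\<exists>L c. (\<forall>b<Suc k. c b \<in> C) \<and>
           (\<forall>a<Suc k. \<forall>b<Suc k. (\<Sum>r\<in>R. L a r * M r (c b)) = (if a = b then 1 else 0)))"
proof (induction k)
  case 0
  show ?case
  proof (cases "\<forall>r\<in>R. \<forall>c\<in>C. M r c = 0")
    case True
    then have "mrank_le 0 R C M" unfolding mrank_le_def by simp
    then show ?thesis by simp
  next
    case False
    then obtain r0 c0 where r0: "r0 \<in> R" and c0: "c0 \<in> C" and nz: "M r0 c0 \<noteq> 0" by blast
    let ?L = "\<lambda>a r. if r = r0 then inverse (M r0 c0) else 0"
    have "(\<Sum>r\<in>R. ?L 0 r * M r c0) = inverse (M r0 c0) * M r0 c0"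
    proof -
      have "(\<Sum>r\<in>R. ?L 0 r * M r c0) = (\<Sum>r\<in>R. if r = r0 then inverse (M r0 c0) * M r c0 else 0)"
        by (rule sum.cong) auto
      then show ?thesis using finR r0 by simp
    qed
    then have "(\<Sum>r\<in>R. ?L 0 r * M r c0) = 1" using nz by simp
    then have H: "(\<forall>b<Suc 0. (\<lambda>_. c0) b \<in> C) \<and>
           (\<forall>a<Suc 0. \<forall>b<Suc 0. (\<Sum>r\<in>R. ?L a r * M r ((\<lambda>_. c0) b)) = (if a = b then 1 else 0))"
      using c0 by simp
    show ?thesis by (rule disjI2, rule exI[where x="?L"], rule exI[where x="\<lambda>_. c0"], rule H)
  qed
next
  case (Suc k)
  note sum.lessThan_Suc[simp del] lessThan_Suc[simp del]
  show ?case
  proof (cases "mrank_le (Suc k) R C M")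
    case True
    then show ?thesis by simp
  next
    case notS: False
    then have "\<not> mrank_le k R C M" using mrank_mono[of k R C M "Suc k"] by auto
    with Suc.IH obtain L c where cC: "\<forall>b<Suc k. c b \<in> C"
      and LM: "\<forall>a<Suc k. \<forall>b<Suc k. (\<Sum>r\<in>R. L a r * M r (c b)) = (if a = b then 1 else 0)" by blast
    define M' where "M' r x = M r x - (\<Sum>a<Suc k. M r (c a) * (\<Sum>r'\<in>R. L a r' * M r' x))" for r x
    have "\<not> (\<forall>r\<in>R. \<forall>x\<in>C. M' r x = 0)"
    proof
      assume "\<forall>r\<in>R. \<forall>x\<in>C. M' r x = 0"
      then have H: "\<forall>r\<in>R. \<forall>x\<in>C. M r x = (\<Sum>a<Suc k. (\<lambda>r a. M r (c a)) r a * (\<Sum>r'\<in>R. L a r' * M r' x))"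
        unfolding M'_def by simp
      have "mrank_le (Suc k) R C M" unfolding mrank_le_def by (rule exI[where x="\<lambda>r a. M r (c a)"], rule exI[where x=L], rule H)
      then show False using notS by simp
    qed
    then obtain r0 c0 where r0: "r0 \<in> R" and c0: "c0 \<in> C" and nz: "M' r0 c0 \<noteq> 0" by blast
    define dl where "dl = M' r0 c0"
    define v where "v r = ((if r = r0 then 1 else 0) - (\<Sum>a<Suc k. M r0 (c a) * L a r)) / dl" for r
    have vM: "(\<Sum>r\<in>R. v r * M r x) = M' r0 x / dl" for x
    proof -
      have pt: "v r * M r x = ((if r = r0 then 1 else 0) * M r x - (\<Sum>a<Suc k. M r0 (c a) * L a r * M r x)) / dl" for r
        unfolding v_def by (simp add: left_diff_distrib sum_distrib_right)
      have "(\<Sum>r\<in>R. v r * M r x) = ((\<Sum>r\<in>R. (if r = r0 then 1 else 0) * M r x)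
              - (\<Sum>r\<in>R. \<Sum>a<Suc k. M r0 (c a) * L a r * M r x)) / dl"
        unfolding pt by (simp add: sum_divide_distrib[symmetric] sum_subtractf)
      also have "(\<Sum>r\<in>R. (if r = r0 then 1 else 0) * M r x) = M r0 x"
        by (rule delta_left'[OF finR r0])
      also have "(\<Sum>r\<in>R. \<Sum>a<Suc k. M r0 (c a) * L a r * M r x) = (\<Sum>a<Suc k. M r0 (c a) * (\<Sum>r'\<in>R. L a r' * M r' x))"
        by (subst sum.swap) (simp add: sum_distrib_left mult.assoc)
      finally show ?thesis unfolding M'_def by simp
    qed
    have M'c: "M' r0 (c b) = 0" if b: "b < Suc k" for b
    proof -
      have "(\<Sum>a<Suc k. M r0 (c a) * (\<Sum>r'\<in>R. L a r' * M r' (c b))) = (\<Sum>a<Suc k. M r0 (c a) * (if a = b then 1 else 0))"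
        using LM b by (intro sum.cong) auto
      also have "\<dots> = M r0 (c b)" using b by (simp add: if_distrib cong: if_cong)
      finally show ?thesis unfolding M'_def by simp
    qed
    have dlnz: "dl \<noteq> 0" using nz unfolding dl_def .
    have vc: "(\<Sum>r\<in>R. v r * M r (c b)) = 0" if "b < Suc k" for b
      using vM M'c[OF that] by simp
    have vc0: "(\<Sum>r\<in>R. v r * M r c0) = 1"
      using vM dlnz unfolding dl_def by simp
    define w where "w a = (\<Sum>r\<in>R. L a r * M r c0)" for a
    define L' where "L' a r = (if a < Suc k then L a r - w a * v r else v r)" for a r
    define c' where "c' b = (if b < Suc k then c b else c0)" for b
    have L'M: "(\<Sum>r\<in>R. L' a r * M r x) = (if a < Suc k then (\<Sum>r\<in>R. L a r * M r x) - w a * (\<Sum>r\<in>R. v r * M r x)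
                  else (\<Sum>r\<in>R. v r * M r x))" for a x
      unfolding L'_def by (simp add: left_diff_distrib sum_subtractf sum_distrib_left mult.assoc)
    have H: "(\<forall>b<Suc (Suc k). c' b \<in> C) \<and>
           (\<forall>a<Suc (Suc k). \<forall>b<Suc (Suc k). (\<Sum>r\<in>R. L' a r * M r (c' b)) = (if a = b then 1 else 0))"
    proof (intro conjI allI impI)
      fix b assume "b < Suc (Suc k)" then show "c' b \<in> C" using cC c0 unfolding c'_def by auto
    next
      fix a b assume a: "a < Suc (Suc k)" and b: "b < Suc (Suc k)"
      show "(\<Sum>r\<in>R. L' a r * M r (c' b)) = (if a = b then 1 else 0)"
      proof (cases "a < Suc k")
        case aT: True
        show ?thesis
        proof (cases "b < Suc k")
          case True
          then show ?thesis using aT LM vc unfolding L'M c'_def by simp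
        next
          case False
          then have "b = Suc k" using b by simp
          then show ?thesis using aT vc0 unfolding L'M c'_def w_def by simp
        qed
      next
        case aF: False
        then have "a = Suc k" using a by simp
        then show ?thesis using vc vc0 unfolding L'M c'_def by (cases "b < Suc k") (use b in auto)
      qed
    qed
    show ?thesis by (rule disjI2, rule exI[where x=L'], rule exI[where x=c'], rule H)
  qed
qed

lemma det_lowrank:
  fixes X :: "nat \<Rightarrow> nat \<Rightarrow> 'k::comm_ring_1"
  shows "det (mat (Suc k) (Suc k) (\<lambda>(a,b). \<Sum>q<k. X a q * Y q b)) = 0"
proof -
  let ?n = "Suc k"
  let ?A = "mat ?n ?n (\<lambda>(a,q). if q < k then X a q else 0)"
  let ?B = "mat ?n ?n (\<lambda>(q,b). if q < k then Y q b else 0)"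
  have AB: "mat ?n ?n (\<lambda>(a,b). \<Sum>q<k. X a q * Y q b) = ?A * ?B"
  proof (rule eq_matI)
    fix i j assume i: "i < dim_row (?A * ?B)" and j: "j < dim_col (?A * ?B)"
    have "(?A * ?B) $$ (i,j) = (\<Sum>q\<in>{0..<?n}. ?A $$ (i,q) * ?B $$ (q,j))"
      using i j by (simp add: scalar_prod_def)
    also have "\<dots> = (\<Sum>q\<in>{0..<?n}. (if q < k then X i q * Y q j else 0))"
      using i j by (intro sum.cong) auto
    also have "\<dots> = (\<Sum>q<k. X i q * Y q j)"
      by (rule sum.mono_neutral_cong_right) auto
    finally show "mat ?n ?n (\<lambda>(a,b). \<Sum>q<k. X a q * Y q b) $$ (i,j) = (?A * ?B) $$ (i,j)"
      using i j by simp
  qed auto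
  have "det ?B = 0"
  proof -
    have "det ?B = (\<Sum>p\<in>{p. p permutes {0..<?n}}. of_int (sign p) * (\<Prod>i=0..<?n. ?B $$ (i, p i)))"
      by (rule det_def') simp
    also have "\<dots> = 0"
    proof (rule sum.neutral, intro ballI)
      fix p assume p: "p \<in> {p. p permutes {0..<?n}}"
      have "p k < ?n" using p permutes_in_image[of p "{0..<?n}" k] by auto
      then have "?B $$ (k, p k) = 0" by simp
      then have "(\<Prod>i=0..<?n. ?B $$ (i, p i)) = 0" by (intro prod_zero) auto
      then show "of_int (sign p) * (\<Prod>i=0..<?n. ?B $$ (i, p i)) = 0" by simp
    qed
    finally show ?thesis .
  qed
  then show ?thesis unfolding AB by (subst det_mult[of _ ?n]) auto
qed

lemma det_delta: "det (mat n n (\<lambda>(a,b). if a = b then 1 else 0)) = (1::'k::comm_ring_1)"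
  using det_one[of n] unfolding one_mat_def by simp

lemma pf_det:
  assumes "\<And>a b. a < n \<Longrightarrow> b < n \<Longrightarrow> e a b \<in> poly_fun"
  shows "(\<lambda>\<tau>. det (mat n n (\<lambda>(a,b). e a b \<tau>))) \<in> poly_fun"
proof -
  have eq: "(\<lambda>\<tau>. det (mat n n (\<lambda>(a,b). e a b \<tau>))) =
     (\<lambda>\<tau>. \<Sum>p\<in>{p. p permutes {0..<n}}. of_int (sign p) * (\<Prod>i=0..<n. e i (p i) \<tau>))"
  proof
    fix \<tau>
    have "det (mat n n (\<lambda>(a,b). e a b \<tau>)) = (\<Sum>p\<in>{p. p permutes {0..<n}}. of_int (sign p) * (\<Prod>i=0..<n. (mat n n (\<lambda>(a,b). e a b \<tau>)) $$ (i, p i)))"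
      by (rule det_def') simp
    also have "\<dots> = (\<Sum>p\<in>{p. p permutes {0..<n}}. of_int (sign p) * (\<Prod>i=0..<n. e i (p i) \<tau>))"
    proof (rule sum.cong[OF refl])
      fix p assume p: "p \<in> {p. p permutes {0..<n}}"
      have "\<And>i. i \<in> {0..<n} \<Longrightarrow> p i < n" using p permutes_in_image[of p "{0..<n}"] by auto
      then show "of_int (sign p) * (\<Prod>i=0..<n. (mat n n (\<lambda>(a,b). e a b \<tau>)) $$ (i, p i)) = of_int (sign p) * (\<Prod>i=0..<n. e i (p i) \<tau>)"
        by (intro arg_cong[where f="\<lambda>x. of_int (sign p) * x"] prod.cong) auto
    qed
    finally show "det (mat n n (\<lambda>(a,b). e a b \<tau>)) = (\<Sum>p\<in>{p. p permutes {0..<n}}. of_int (sign p) * (\<Prod>i=0..<n. e i (p i) \<tau>))" .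
  qed
  show ?thesis unfolding eq
  proof (rule pf_sum)
    show "finite {p. p permutes {0..<n}}" by (rule finite_permutations) simp
  next
    fix p assume p: "p \<in> {p. p permutes {0..<n}}"
    have "\<And>i. i \<in> {0..<n} \<Longrightarrow> p i < n" using p permutes_in_image[of p "{0..<n}"] by auto
    then show "(\<lambda>\<tau>. of_int (sign p) * (\<Prod>i=0..<n. e i (p i) \<tau>)) \<in> poly_fun"
      by (intro pf_mult pf_const pf_prod) (auto intro: assms)
  qed
qed



lemma (in group) bij_cmult: "a \<in> carrier G \<Longrightarrow> bij_betw (\<lambda>x. a \<otimes> x) (carrier G) (carrier G)"
  unfolding bij_betw_def using inj_on_cmult surj_const_mult by blast

lemma (in group) sum_cmult: "a \<in> carrier G \<Longrightarrow> (\<Sum>x\<in>carrier G. f (a \<otimes> x)) = (\<Sum>x\<in>carrier G. f x)"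
  by (rule sum.reindex_bij_betw[OF bij_cmult])

definition eigdata :: "('g,'c) monoid_scheme \<Rightarrow> 'b set \<Rightarrow> ('g \<Rightarrow> 'b \<Rightarrow> 'b \<Rightarrow> 'k::field) \<Rightarrow> nat
   \<Rightarrow> ('b \<Rightarrow> nat \<Rightarrow> 'k) \<Rightarrow> (nat \<Rightarrow> 'b \<Rightarrow> 'k) \<Rightarrow> (nat \<Rightarrow> 'g \<Rightarrow> 'k) \<Rightarrow> bool" where
  "eigdata G I \<rho> d P Q \<chi> \<longleftrightarrow>
     (\<forall>x\<in>I. \<forall>y\<in>I. (\<Sum>r<d. P x r * Q r y) = (if x = y then 1 else 0)) \<and>
     (\<forall>r<d. \<forall>s<d. (\<Sum>x\<in>I. Q r x * P x s) = (if r = s then 1 else 0)) \<and>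
     (\<forall>g\<in>carrier G. \<forall>x\<in>I. \<forall>r<d. (\<Sum>y\<in>I. \<rho> g x y * P y r) = \<chi> r g * P x r)"

lemma eigen_exists:
  fixes G :: "('g,'c) monoid_scheme" and \<rho> :: "'g \<Rightarrow> 'b \<Rightarrow> 'b \<Rightarrow> 'k::field"
  assumes K_split: "\<forall>d (\<sigma> :: 'g \<Rightarrow> nat \<Rightarrow> nat \<Rightarrow> 'k). is_rep G {..<d} \<sigma> \<longrightarrow> splits_into_lines G d \<sigma>"
    and rep: "is_rep G I \<rho>"
  shows "\<exists>d P Q \<chi>. eigdata G I \<rho> d P Q \<chi>"
proof -
  have finI: "finite I" using rep unfolding is_rep_def by simp
  define d where "d = card I"
  obtain e where bij: "bij_betw e {..<d} I"
    using finite_same_card_bij[of "{..<d}" I] finI unfolding d_def by auto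
  define e' where "e' = inv_into {..<d} e"
  have bij': "bij_betw e' I {..<d}" unfolding e'_def by (rule bij_betw_inv_into[OF bij])
  have ee': "\<And>x. x \<in> I \<Longrightarrow> e (e' x) = x" unfolding e'_def using bij bij_betw_inv_into_right by metis
  have e'e: "\<And>a. a < d \<Longrightarrow> e' (e a) = a" unfolding e'_def using bij bij_betw_inv_into_left by (metis lessThan_iff)
  have eI: "\<And>a. a < d \<Longrightarrow> e a \<in> I" using bij bij_betw_apply by fastforce
  have e'I: "\<And>x. x \<in> I \<Longrightarrow> e' x < d" using bij' bij_betw_apply by fastforce
  define \<sigma> where "\<sigma> g a b = \<rho> g (e a) (e b)" for g a b
  have "is_rep G {..<d} \<sigma>"
    unfolding is_rep_def
  proof (intro conjI ballI)
    show "finite {..<d}" by simp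
  next
    fix a b assume a: "a \<in> {..<d}" and b: "b \<in> {..<d}"
    have "\<rho> \<one>\<^bsub>G\<^esub> (e a) (e b) = (if e a = e b then 1 else 0)"
      using rep eI a b unfolding is_rep_def by auto
    moreover have "e a = e b \<longleftrightarrow> a = b" using e'e a b by (metis lessThan_iff)
    ultimately show "\<sigma> \<one>\<^bsub>G\<^esub> a b = (if a = b then 1 else 0)" unfolding \<sigma>_def by simp
  next
    fix g h a b assume g: "g \<in> carrier G" and h: "h \<in> carrier G" and a: "a \<in> {..<d}" and b: "b \<in> {..<d}"
    have "\<rho> (g \<otimes>\<^bsub>G\<^esub> h) (e a) (e b) = (\<Sum>c\<in>I. \<rho> g (e a) c * \<rho> h c (e b))"
      using rep g h eI a b unfolding is_rep_def by auto
    also have "\<dots> = (\<Sum>c\<in>{..<d}. \<rho> g (e a) (e c) * \<rho> h (e c) (e b))"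
      by (rule sum.reindex_bij_betw[OF bij, symmetric])
    finally show "\<sigma> (g \<otimes>\<^bsub>G\<^esub> h) a b = (\<Sum>c\<in>{..<d}. \<sigma> g a c * \<sigma> h c b)"
      unfolding \<sigma>_def .
  qed
  then have "splits_into_lines G d \<sigma>" using K_split by blast
  then obtain P0 Q0 \<chi> where
    PQ: "\<forall>a<d. \<forall>b<d. (\<Sum>c<d. P0 a c * Q0 c b) = (if a = b then 1 else 0)" and
    QP: "\<forall>a<d. \<forall>b<d. (\<Sum>c<d. Q0 a c * P0 c b) = (if a = b then 1 else 0)" and
    eig: "\<forall>g\<in>carrier G. \<forall>a<d. \<forall>r<d. (\<Sum>c<d. \<sigma> g a c * P0 c r) = \<chi> r g * P0 a r"
    unfolding splits_into_lines_def by blast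
  define P where "P x r = P0 (e' x) r" for x r
  define Q where "Q r x = Q0 r (e' x)" for r x
  have "eigdata G I \<rho> d P Q \<chi>"
    unfolding eigdata_def
  proof (intro conjI ballI allI impI)
    fix x y assume x: "x \<in> I" and y: "y \<in> I"
    have "(\<Sum>r<d. P x r * Q r y) = (if e' x = e' y then 1 else 0)"
      unfolding P_def Q_def using PQ e'I x y by simp
    moreover have "e' x = e' y \<longleftrightarrow> x = y" using ee' x y by metis
    ultimately show "(\<Sum>r<d. P x r * Q r y) = (if x = y then 1 else 0)" by simp
  next
    fix r s assume r: "r < d" and s: "s < d"
    have "(\<Sum>x\<in>I. Q r x * P x s) = (\<Sum>a\<in>{..<d}. Q0 r a * P0 a s)"
      unfolding P_def Q_def by (rule sum.reindex_bij_betw[OF bij'])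
    then show "(\<Sum>x\<in>I. Q r x * P x s) = (if r = s then 1 else 0)" using QP r s by simp
  next
    fix g x r assume g: "g \<in> carrier G" and x: "x \<in> I" and r: "r < d"
    have "(\<Sum>y\<in>I. \<rho> g x y * P y r) = (\<Sum>c\<in>{..<d}. \<rho> g x (e c) * P (e c) r)"
      by (rule sum.reindex_bij_betw[OF bij, symmetric])
    also have "\<dots> = (\<Sum>c<d. \<sigma> g (e' x) c * P0 c r)"
      unfolding \<sigma>_def P_def using ee'[OF x] e'e by (intro sum.cong) auto
    also have "\<dots> = \<chi> r g * P x r" using eig g e'I[OF x] r unfolding P_def by simp
    finally show "(\<Sum>y\<in>I. \<rho> g x y * P y r) = \<chi> r g * P x r" .
  qed
  then show ?thesis by blast
qed

definition regrep1 :: "('g,'c) monoid_scheme \<Rightarrow> 'g \<Rightarrow> 'g \<Rightarrow> 'g \<Rightarrow> 'k::field" where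
  "regrep1 G g x y = (if x = g \<otimes>\<^bsub>G\<^esub> y then 1 else 0)"

lemma regrep1_rep:
  assumes "group G" "finite (carrier G)"
  shows "is_rep G (carrier G) (regrep1 G)"
proof -
  interpret group G by fact
  show ?thesis unfolding is_rep_def
  proof (intro conjI ballI)
    show "finite (carrier G)" by fact
  next
    fix a b assume "a \<in> carrier G" "b \<in> carrier G"
    then show "regrep1 G \<one>\<^bsub>G\<^esub> a b = (if a = b then 1 else 0)" unfolding regrep1_def by simp
  next
    fix g h a b assume g: "g \<in> carrier G" and h: "h \<in> carrier G" and a: "a \<in> carrier G" and b: "b \<in> carrier G"
    have "(\<Sum>c\<in>carrier G. regrep1 G g a c * regrep1 G h c b) = (\<Sum>c\<in>carrier G. if c = h \<otimes>\<^bsub>G\<^esub> b then regrep1 G g a c else 0)"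
      unfolding regrep1_def by (intro sum.cong) auto
    also have "\<dots> = regrep1 G g a (h \<otimes>\<^bsub>G\<^esub> b)" using h b assms(2) by simp
    also have "\<dots> = regrep1 G (g \<otimes>\<^bsub>G\<^esub> h) a b" unfolding regrep1_def using g h b by (simp add: m_assoc)
    finally show "regrep1 G (g \<otimes>\<^bsub>G\<^esub> h) a b = (\<Sum>c\<in>carrier G. regrep1 G g a c * regrep1 G h c b)" by (rule sym)
  qed
qed

lemma card_nonzero:
  fixes G :: "('g,'c) monoid_scheme"
  assumes grp: "group G" and fin: "finite (carrier G)"
    and ed: "eigdata G (carrier G) (regrep1 G :: 'g \<Rightarrow> 'g \<Rightarrow> 'g \<Rightarrow> 'k::field) d P Q \<chi>"
  shows "of_nat (card (carrier G)) \<noteq> (0::'k)"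
proof
  interpret group G by fact
  assume N0: "of_nat (card (carrier G)) = (0::'k)"
  have E1: "\<forall>x\<in>carrier G. \<forall>y\<in>carrier G. (\<Sum>r<d. P x r * Q r y) = (if x = y then 1 else 0)"
    and E3: "\<forall>g\<in>carrier G. \<forall>x\<in>carrier G. \<forall>r<d. (\<Sum>y\<in>carrier G. regrep1 G g x y * P y r) = \<chi> r g * P x r"
    using ed unfolding eigdata_def by auto
  have shift: "P (inv\<^bsub>G\<^esub> g \<otimes>\<^bsub>G\<^esub> x) r = \<chi> r g * P x r" if g: "g \<in> carrier G" and x: "x \<in> carrier G" and r: "r < d" for g x r
  proof -
    have "(\<Sum>y\<in>carrier G. regrep1 G g x y * P y r) = (\<Sum>y\<in>carrier G. if y = inv\<^bsub>G\<^esub> g \<otimes>\<^bsub>G\<^esub> x then P y r else 0)"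
      unfolding regrep1_def
    proof (intro sum.cong refl)
      fix y assume y: "y \<in> carrier G"
      have "x = g \<otimes>\<^bsub>G\<^esub> y \<longleftrightarrow> y = inv\<^bsub>G\<^esub> g \<otimes>\<^bsub>G\<^esub> x"
        using g x y by (metis inv_closed inv_solve_left)
      then show "(if x = g \<otimes>\<^bsub>G\<^esub> y then 1 else 0) * P y r = (if y = inv\<^bsub>G\<^esub> g \<otimes>\<^bsub>G\<^esub> x then P y r else 0)" by simp
    qed
    also have "\<dots> = P (inv\<^bsub>G\<^esub> g \<otimes>\<^bsub>G\<^esub> x) r" using g x fin by simp
    finally show ?thesis using E3 g x r by simp
  qed
  have s0: "(\<Sum>x\<in>carrier G. P x r) = 0" if r: "r < d" for r
  proof (rule ccontr)
    assume nz: "(\<Sum>x\<in>carrier G. P x r) \<noteq> 0"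
    have "\<chi> r g = 1" if g: "g \<in> carrier G" for g
    proof -
      have "(\<Sum>x\<in>carrier G. P x r) = (\<Sum>x\<in>carrier G. P (inv\<^bsub>G\<^esub> g \<otimes>\<^bsub>G\<^esub> x) r)"
        using sum_cmult[of "inv\<^bsub>G\<^esub> g" "\<lambda>x. P x r"] g by simp
      also have "\<dots> = \<chi> r g * (\<Sum>x\<in>carrier G. P x r)"
        using shift g r by (simp add: sum_distrib_left)
      finally show ?thesis using nz by simp
    qed
    then have P1: "P x r = P \<one>\<^bsub>G\<^esub> r" if x: "x \<in> carrier G" for x
      using shift[OF x x r] x by simp
    have "(\<Sum>x\<in>carrier G. P x r) = (\<Sum>x\<in>carrier G. P \<one>\<^bsub>G\<^esub> r)"
      by (rule sum.cong[OF refl]) (rule P1)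
    then have "(\<Sum>x\<in>carrier G. P x r) = of_nat (card (carrier G)) * P \<one>\<^bsub>G\<^esub> r" by simp
    then show False using nz N0 by simp
  qed
  have "(\<Sum>x\<in>carrier G. \<Sum>r<d. P x r * Q r \<one>\<^bsub>G\<^esub>) = (\<Sum>x\<in>carrier G. if x = \<one>\<^bsub>G\<^esub> then 1 else 0)"
    using E1 by (intro sum.cong) auto
  also have "\<dots> = 1" using fin by simp
  finally have "(\<Sum>x\<in>carrier G. \<Sum>r<d. P x r * Q r \<one>\<^bsub>G\<^esub>) = (1::'k)" .
  moreover have "(\<Sum>x\<in>carrier G. \<Sum>r<d. P x r * Q r \<one>\<^bsub>G\<^esub>) = (\<Sum>r<d. (\<Sum>x\<in>carrier G. P x r) * Q r \<one>\<^bsub>G\<^esub>)"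
    by (subst sum.swap) (simp add: sum_distrib_right)
  moreover have "\<dots> = 0" using s0 by simp
  ultimately show False by simp
qed



lemma eig_E1: "eigdata G I \<rho> d P Q \<chi> \<Longrightarrow> x \<in> I \<Longrightarrow> y \<in> I \<Longrightarrow> (\<Sum>r<d. P x r * Q r y) = (if x = y then 1 else 0)"
  unfolding eigdata_def by auto
lemma eig_E2: "eigdata G I \<rho> d P Q \<chi> \<Longrightarrow> r < d \<Longrightarrow> s < d \<Longrightarrow> (\<Sum>x\<in>I. Q r x * P x s) = (if r = s then 1 else 0)"
  unfolding eigdata_def by auto
lemma eig_E3: "eigdata G I \<rho> d P Q \<chi> \<Longrightarrow> g \<in> carrier G \<Longrightarrow> x \<in> I \<Longrightarrow> r < d \<Longrightarrow> (\<Sum>y\<in>I. \<rho> g x y * P y r) = \<chi> r g * P x r"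
  unfolding eigdata_def by auto

lemma rep_one: "is_rep G I \<rho> \<Longrightarrow> x \<in> I \<Longrightarrow> y \<in> I \<Longrightarrow> \<rho> \<one>\<^bsub>G\<^esub> x y = (if x = y then 1 else 0)"
  unfolding is_rep_def by auto
lemma rep_mult: "is_rep G I \<rho> \<Longrightarrow> g \<in> carrier G \<Longrightarrow> h \<in> carrier G \<Longrightarrow> x \<in> I \<Longrightarrow> y \<in> I \<Longrightarrow>
   \<rho> (g \<otimes>\<^bsub>G\<^esub> h) x y = (\<Sum>c\<in>I. \<rho> g x c * \<rho> h c y)"
  unfolding is_rep_def by auto
lemma rep_fin: "is_rep G I \<rho> \<Longrightarrow> finite I"
  unfolding is_rep_def by auto

lemma chi_props:
  fixes \<rho> :: "'g \<Rightarrow> 'b \<Rightarrow> 'b \<Rightarrow> 'k::field"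
  assumes grp: "group G" and rep: "is_rep G I \<rho>" and ed: "eigdata G I \<rho> d P Q \<chi>" and r: "r < d"
  shows "\<chi> r \<one>\<^bsub>G\<^esub> = 1"
    and "\<And>g h. g \<in> carrier G \<Longrightarrow> h \<in> carrier G \<Longrightarrow> \<chi> r (g \<otimes>\<^bsub>G\<^esub> h) = \<chi> r g * \<chi> r h"
proof -
  interpret group G by fact
  have fin: "finite I" using rep by (rule rep_fin)
  obtain x where x: "x \<in> I" and nz: "P x r \<noteq> 0"
  proof (rule ccontr)
    assume "\<not> thesis"
    then have "\<forall>x\<in>I. P x r = 0" using that by blast
    then have "(\<Sum>x\<in>I. Q r x * P x r) = 0" by simp
    then show False using eig_E2[OF ed r r] by simp
  qed
  have "(\<Sum>y\<in>I. \<rho> \<one>\<^bsub>G\<^esub> x y * P y r) = (\<Sum>y\<in>I. (if x = y then 1 else 0) * P y r)"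
    using rep_one[OF rep x] by (intro sum.cong) auto
  also have "\<dots> = P x r" by (rule delta_left[OF fin x])
  finally show "\<chi> r \<one>\<^bsub>G\<^esub> = 1" using eig_E3[OF ed _ x r] nz by simp
  fix g h assume g: "g \<in> carrier G" and h: "h \<in> carrier G"
  have "\<chi> r (g \<otimes>\<^bsub>G\<^esub> h) * P x r = (\<Sum>y\<in>I. \<rho> (g \<otimes>\<^bsub>G\<^esub> h) x y * P y r)"
    using eig_E3[OF ed _ x r] g h by simp
  also have "\<dots> = (\<Sum>y\<in>I. (\<Sum>c\<in>I. \<rho> g x c * \<rho> h c y) * P y r)"
    using rep_mult[OF rep g h x] by (intro sum.cong) auto
  also have "\<dots> = (\<Sum>c\<in>I. \<rho> g x c * (\<Sum>y\<in>I. \<rho> h c y * P y r))"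
    unfolding sum_distrib_left sum_distrib_right mult.assoc by (rule sum.swap)
  also have "\<dots> = (\<Sum>c\<in>I. \<rho> g x c * (\<chi> r h * P c r))"
    using eig_E3[OF ed h _ r] by (intro sum.cong) auto
  also have "\<dots> = \<chi> r h * (\<Sum>c\<in>I. \<rho> g x c * P c r)"
    by (simp add: sum_distrib_left mult_ac)
  also have "\<dots> = \<chi> r h * (\<chi> r g * P x r)" using eig_E3[OF ed g x r] by simp
  finally show "\<chi> r (g \<otimes>\<^bsub>G\<^esub> h) = \<chi> r g * \<chi> r h" using nz by (simp add: mult_ac)
qed

lemma eig_E4:
  fixes \<rho> :: "'g \<Rightarrow> 'b \<Rightarrow> 'b \<Rightarrow> 'k::field"
  assumes rep: "is_rep G I \<rho>" and ed: "eigdata G I \<rho> d P Q \<chi>" and r: "r < d"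
    and g: "g \<in> carrier G" and x: "x \<in> I"
  shows "(\<Sum>y\<in>I. Q r y * \<rho> g y x) = \<chi> r g * Q r x"
proof -
  have fin: "finite I" using rep by (rule rep_fin)
  have 1: "\<rho> g y x = (\<Sum>s<d. (\<Sum>z\<in>I. \<rho> g y z * P z s) * Q s x)" if y: "y \<in> I" for y
  proof -
    have "(\<Sum>s<d. (\<Sum>z\<in>I. \<rho> g y z * P z s) * Q s x) = (\<Sum>z\<in>I. \<rho> g y z * (\<Sum>s<d. P z s * Q s x))"
      by (simp add: sum_distrib_left sum_distrib_right mult.assoc sum.swap[of _ I])
    also have "\<dots> = (\<Sum>z\<in>I. \<rho> g y z * (if z = x then 1 else 0))"
      using eig_E1[OF ed _ x] by (intro sum.cong) auto
    also have "\<dots> = \<rho> g y x" by (rule delta_right[OF fin x])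
    finally show ?thesis by simp
  qed
  have "(\<Sum>y\<in>I. Q r y * \<rho> g y x) = (\<Sum>y\<in>I. Q r y * (\<Sum>s<d. (\<chi> s g * P y s) * Q s x))"
    using 1 eig_E3[OF ed g] by (intro sum.cong) auto
  also have "\<dots> = (\<Sum>s<d. \<chi> s g * (\<Sum>y\<in>I. Q r y * P y s) * Q s x)"
    by (simp add: sum_distrib_left sum_distrib_right mult_ac sum.swap[of _ I])
  also have "\<dots> = (\<Sum>s<d. \<chi> s g * (if r = s then 1 else 0) * Q s x)"
    using eig_E2[OF ed r] by (intro sum.cong) auto
  also have "\<dots> = (\<Sum>s<d. if s = r then \<chi> s g * Q s x else 0)" by (rule sum.cong) auto
  also have "\<dots> = \<chi> r g * Q r x" using r by simp
  finally show ?thesis .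
qed

lemma orth:
  fixes a b :: "'g \<Rightarrow> 'k::field"
  assumes cg: "comm_group G" and fin: "finite (carrier G)"
    and a1: "a \<one>\<^bsub>G\<^esub> = 1" and am: "\<And>g h. g \<in> carrier G \<Longrightarrow> h \<in> carrier G \<Longrightarrow> a (g \<otimes>\<^bsub>G\<^esub> h) = a g * a h"
    and b1: "b \<one>\<^bsub>G\<^esub> = 1" and bm: "\<And>g h. g \<in> carrier G \<Longrightarrow> h \<in> carrier G \<Longrightarrow> b (g \<otimes>\<^bsub>G\<^esub> h) = b g * b h"
  shows "(\<Sum>g\<in>carrier G. a g * b (inv\<^bsub>G\<^esub> g)) = (if \<forall>g\<in>carrier G. a g = b g then of_nat (card (carrier G)) else 0)"
proof -
  interpret comm_group G by fact
  have binv: "b (inv\<^bsub>G\<^esub> g) * b g = 1" if "g \<in> carrier G" for g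
    using bm[of "inv\<^bsub>G\<^esub> g" g] b1 that by simp
  show ?thesis
  proof (cases "\<forall>g\<in>carrier G. a g = b g")
    case True
    have "(\<Sum>g\<in>carrier G. a g * b (inv\<^bsub>G\<^esub> g)) = (\<Sum>g\<in>carrier G. 1)"
      using True binv by (intro sum.cong) (auto simp: mult.commute)
    then show ?thesis using True by simp
  next
    case False
    then obtain h where h: "h \<in> carrier G" and ne: "a h \<noteq> b h" by blast
    define f where "f g = a g * b (inv\<^bsub>G\<^esub> g)" for g
    have fm: "f (h \<otimes>\<^bsub>G\<^esub> g) = f h * f g" if g: "g \<in> carrier G" for g
      unfolding f_def using g h am bm by (simp add: inv_mult mult_ac)
    have fh: "f h \<noteq> 1"
    proof
      assume "f h = 1"
      then have "a h = a h * (b (inv\<^bsub>G\<^esub> h) * b h)" using binv h by simp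
      also have "\<dots> = f h * b h" unfolding f_def by (simp add: mult_ac)
      finally show False using \<open>f h = 1\<close> ne by simp
    qed
    have "(\<Sum>g\<in>carrier G. f g) = (\<Sum>g\<in>carrier G. f (h \<otimes>\<^bsub>G\<^esub> g))"
      using sum_cmult[OF h, of f] by simp
    also have "\<dots> = f h * (\<Sum>g\<in>carrier G. f g)"
      using fm by (simp add: sum_distrib_left)
    finally have "(1 - f h) * (\<Sum>g\<in>carrier G. f g) = 0" by (simp add: algebra_simps)
    then have "(\<Sum>g\<in>carrier G. f g) = 0" using fh by simp
    then show ?thesis using False unfolding f_def by (simp only: if_False)
  qed
qed

definition frob :: "('g,'c) monoid_scheme \<Rightarrow> 'b set \<Rightarrow> ('g \<Rightarrow> 'b \<Rightarrow> 'b \<Rightarrow> 'k::field) \<Rightarrow> (nat \<Rightarrow> 'b \<Rightarrow> 'k)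
    \<Rightarrow> ('g \<times> nat) \<Rightarrow> 'b \<Rightarrow> 'k" where
  "frob G I \<rho> \<alpha> = (\<lambda>(g,s) y. \<Sum>x\<in>I. \<alpha> s x * \<rho> (inv\<^bsub>G\<^esub> g) x y)"

definition dfrob :: "('g,'c) monoid_scheme \<Rightarrow> 'b set \<Rightarrow> ('g \<Rightarrow> 'b \<Rightarrow> 'b \<Rightarrow> 'k::field) \<Rightarrow> (nat \<Rightarrow> 'b \<Rightarrow> 'k)
    \<Rightarrow> 'b \<Rightarrow> ('g \<times> nat) \<Rightarrow> 'k" where
  "dfrob G I \<rho> u = (\<lambda>x (g,s). \<Sum>z\<in>I. \<rho> g x z * u s z)"

lemma reg_sum1:
  assumes grp: "group G" and fin: "finite (carrier G)" and h: "h \<in> carrier G" and g: "g \<in> carrier G" and s: "s < n"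
  shows "(\<Sum>c\<in>reg_idx G n. reg_rep G h (g,s) c * F c) = F (inv\<^bsub>G\<^esub> h \<otimes>\<^bsub>G\<^esub> g, s)"
proof -
  interpret group G by fact
  have "(\<Sum>c\<in>reg_idx G n. reg_rep G h (g,s) c * F c) = (\<Sum>c\<in>reg_idx G n. if c = (inv\<^bsub>G\<^esub> h \<otimes>\<^bsub>G\<^esub> g, s) then F c else 0)"
  proof (intro sum.cong refl)
    fix c assume c: "c \<in> reg_idx G n"
    have "(g = h \<otimes>\<^bsub>G\<^esub> fst c \<and> s = snd c) \<longleftrightarrow> c = (inv\<^bsub>G\<^esub> h \<otimes>\<^bsub>G\<^esub> g, s)"
      using c h g unfolding reg_idx_def by (cases c) (auto simp: inv_solve_left)
    then show "reg_rep G h (g,s) c * F c = (if c = (inv\<^bsub>G\<^esub> h \<otimes>\<^bsub>G\<^esub> g, s) then F c else 0)"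
      unfolding reg_rep_def by auto
  qed
  also have "\<dots> = F (inv\<^bsub>G\<^esub> h \<otimes>\<^bsub>G\<^esub> g, s)"
    using fin h g s unfolding reg_idx_def by simp
  finally show ?thesis .
qed

lemma reg_sum2:
  assumes grp: "group G" and fin: "finite (carrier G)" and h: "h \<in> carrier G" and g: "g \<in> carrier G" and s: "s < n"
  shows "(\<Sum>c\<in>reg_idx G n. F c * reg_rep G h c (g,s)) = F (h \<otimes>\<^bsub>G\<^esub> g, s)"
proof -
  interpret group G by fact
  have "(\<Sum>c\<in>reg_idx G n. F c * reg_rep G h c (g,s)) = (\<Sum>c\<in>reg_idx G n. if c = (h \<otimes>\<^bsub>G\<^esub> g, s) then F c else 0)"
    unfolding reg_rep_def by (intro sum.cong refl) (auto simp: prod_eq_iff)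
  also have "\<dots> = F (h \<otimes>\<^bsub>G\<^esub> g, s)"
    using fin h g s unfolding reg_idx_def by simp
  finally show ?thesis .
qed

lemma frob_glin:
  fixes \<rho> :: "'g \<Rightarrow> 'b \<Rightarrow> 'b \<Rightarrow> 'k::field"
  assumes grp: "group G" and fin: "finite (carrier G)" and rep: "is_rep G I \<rho>"
  shows "glin G I \<rho> (reg_idx G n) (reg_rep G) (frob G I \<rho> \<alpha>)"
  unfolding glin_def
proof (intro ballI)
  interpret group G by fact
  have finI: "finite I" using rep by (rule rep_fin)
  fix h b a assume h: "h \<in> carrier G" and b: "b \<in> reg_idx G n" and a: "a \<in> I"
  obtain g s where bgs: "b = (g,s)" and g: "g \<in> carrier G" and s: "s < n"
    using b unfolding reg_idx_def by auto
  have "(\<Sum>c\<in>reg_idx G n. reg_rep G h b c * frob G I \<rho> \<alpha> c a) = frob G I \<rho> \<alpha> (inv\<^bsub>G\<^esub> h \<otimes>\<^bsub>G\<^esub> g, s) a"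
    unfolding bgs by (rule reg_sum1[OF grp fin h g s])
  also have "\<dots> = (\<Sum>x\<in>I. \<alpha> s x * \<rho> (inv\<^bsub>G\<^esub> g \<otimes>\<^bsub>G\<^esub> h) x a)"
    unfolding frob_def using g h by (simp add: inv_mult_group)
  also have "\<dots> = (\<Sum>x\<in>I. \<alpha> s x * (\<Sum>c\<in>I. \<rho> (inv\<^bsub>G\<^esub> g) x c * \<rho> h c a))"
    using rep_mult[OF rep _ h _ a] g by (intro sum.cong) auto
  also have "\<dots> = (\<Sum>c\<in>I. frob G I \<rho> \<alpha> b c * \<rho> h c a)"
    unfolding frob_def bgs case_prod_conv sum_distrib_left sum_distrib_right mult.assoc by (rule sum.swap)
  finally show "(\<Sum>c\<in>reg_idx G n. reg_rep G h b c * frob G I \<rho> \<alpha> c a) = (\<Sum>c\<in>I. frob G I \<rho> \<alpha> b c * \<rho> h c a)" .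
qed

lemma dfrob_glin:
  fixes \<rho> :: "'g \<Rightarrow> 'b \<Rightarrow> 'b \<Rightarrow> 'k::field"
  assumes grp: "group G" and fin: "finite (carrier G)" and rep: "is_rep G I \<rho>"
  shows "glin G (reg_idx G n) (reg_rep G) I \<rho> (dfrob G I \<rho> u)"
  unfolding glin_def
proof (intro ballI)
  interpret group G by fact
  have finI: "finite I" using rep by (rule rep_fin)
  fix h b a assume h: "h \<in> carrier G" and b: "b \<in> I" and a: "a \<in> reg_idx G n"
  obtain g s where ags: "a = (g,s)" and g: "g \<in> carrier G" and s: "s < n"
    using a unfolding reg_idx_def by auto
  have "(\<Sum>c\<in>I. \<rho> h b c * dfrob G I \<rho> u c a) = (\<Sum>z\<in>I. (\<Sum>c\<in>I. \<rho> h b c * \<rho> g c z) * u s z)"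
    unfolding dfrob_def ags case_prod_conv sum_distrib_left sum_distrib_right mult.assoc by (rule sum.swap)
  also have "\<dots> = (\<Sum>z\<in>I. \<rho> (h \<otimes>\<^bsub>G\<^esub> g) b z * u s z)"
    using rep_mult[OF rep h g b] by (intro sum.cong) auto
  also have "\<dots> = dfrob G I \<rho> u b (h \<otimes>\<^bsub>G\<^esub> g, s)" unfolding dfrob_def by simp
  also have "\<dots> = (\<Sum>c\<in>reg_idx G n. dfrob G I \<rho> u b c * reg_rep G h c a)"
    unfolding ags by (rule reg_sum2[OF grp fin h g s, symmetric])
  finally show "(\<Sum>c\<in>I. \<rho> h b c * dfrob G I \<rho> u c a) = (\<Sum>c\<in>reg_idx G n. dfrob G I \<rho> u b c * reg_rep G h c a)" .
qed

lemma frob_one: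
  fixes \<rho> :: "'g \<Rightarrow> 'b \<Rightarrow> 'b \<Rightarrow> 'k::field"
  assumes grp: "group G" and rep: "is_rep G I \<rho>" and y: "y \<in> I"
  shows "frob G I \<rho> \<alpha> (\<one>\<^bsub>G\<^esub>, s) y = \<alpha> s y"
proof -
  interpret group G by fact
  have finI: "finite I" using rep by (rule rep_fin)
  have "frob G I \<rho> \<alpha> (\<one>\<^bsub>G\<^esub>, s) y = (\<Sum>x\<in>I. \<alpha> s x * (if x = y then 1 else 0))"
    unfolding frob_def using rep_one[OF rep _ y] by (auto intro: sum.cong)
  also have "\<dots> = \<alpha> s y" by (rule delta_right[OF finI y])
  finally show ?thesis .
qed



lemma swap4:
  "(\<Sum>a\<in>A. \<Sum>b\<in>B. \<Sum>c\<in>C. \<Sum>d\<in>D. F a b c d) = (\<Sum>c\<in>C. \<Sum>d\<in>D. \<Sum>a\<in>A. \<Sum>b\<in>B. F a b c d)"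
proof -
  have "(\<Sum>a\<in>A. \<Sum>b\<in>B. \<Sum>c\<in>C. \<Sum>d\<in>D. F a b c d) = (\<Sum>a\<in>A. \<Sum>c\<in>C. \<Sum>b\<in>B. \<Sum>d\<in>D. F a b c d)"
    by (rule sum.cong[OF refl], rule sum.swap)
  also have "\<dots> = (\<Sum>c\<in>C. \<Sum>a\<in>A. \<Sum>b\<in>B. \<Sum>d\<in>D. F a b c d)"
    by (rule sum.swap)
  also have "\<dots> = (\<Sum>c\<in>C. \<Sum>a\<in>A. \<Sum>d\<in>D. \<Sum>b\<in>B. F a b c d)"
    by (rule sum.cong[OF refl], rule sum.cong[OF refl], rule sum.swap)
  also have "\<dots> = (\<Sum>c\<in>C. \<Sum>d\<in>D. \<Sum>a\<in>A. \<Sum>b\<in>B. F a b c d)"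
    by (rule sum.cong[OF refl], rule sum.swap)
  finally show ?thesis .
qed

lemma comp_formula:
  fixes \<rho> :: "'g \<Rightarrow> 'b \<Rightarrow> 'b \<Rightarrow> 'k::field"
  assumes grp: "group G" and fin: "finite (carrier G)" and rep: "is_rep G I \<rho>" and ed: "eigdata G I \<rho> d P Q \<chi>"
    and x: "x \<in> I" and y: "y \<in> I"
  shows "(\<Sum>c\<in>reg_idx G n. dfrob G I \<rho> (\<lambda>s z. \<Sum>t<d. P z t * \<beta> t s) x c * frob G I \<rho> (\<lambda>s x. \<Sum>r<d. cc s r * Q r x) c y)
    = (\<Sum>t<d. \<Sum>r<d. P x t * (\<Sum>g\<in>carrier G. \<chi> t g * \<chi> r (inv\<^bsub>G\<^esub> g)) * (\<Sum>s<n. \<beta> t s * cc s r) * Q r y)"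
proof -
  interpret group G by fact
  have finI: "finite I" using rep by (rule rep_fin)
  have D1: "dfrob G I \<rho> (\<lambda>s z. \<Sum>t<d. P z t * \<beta> t s) x (g,s) = (\<Sum>t<d. \<chi> t g * P x t * \<beta> t s)"
    if g: "g \<in> carrier G" for g s
  proof -
    have "dfrob G I \<rho> (\<lambda>s z. \<Sum>t<d. P z t * \<beta> t s) x (g,s) = (\<Sum>z\<in>I. \<Sum>t<d. \<rho> g x z * (P z t * \<beta> t s))"
      unfolding dfrob_def case_prod_conv sum_distrib_left ..
    also have "\<dots> = (\<Sum>t<d. \<Sum>z\<in>I. \<rho> g x z * (P z t * \<beta> t s))" by (rule sum.swap)
    also have "\<dots> = (\<Sum>t<d. (\<Sum>z\<in>I. \<rho> g x z * P z t) * \<beta> t s)"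
      unfolding sum_distrib_right mult.assoc ..
    also have "\<dots> = (\<Sum>t<d. \<chi> t g * P x t * \<beta> t s)"
      using eig_E3[OF ed g x] by (intro sum.cong) auto
    finally show ?thesis .
  qed
  have F1: "frob G I \<rho> (\<lambda>s x. \<Sum>r<d. cc s r * Q r x) (g,s) y = (\<Sum>r<d. cc s r * \<chi> r (inv\<^bsub>G\<^esub> g) * Q r y)"
    if g: "g \<in> carrier G" for g s
  proof -
    have "frob G I \<rho> (\<lambda>s x. \<Sum>r<d. cc s r * Q r x) (g,s) y = (\<Sum>x'\<in>I. \<Sum>r<d. cc s r * (Q r x' * \<rho> (inv\<^bsub>G\<^esub> g) x' y))"
      unfolding frob_def case_prod_conv sum_distrib_right mult.assoc ..
    also have "\<dots> = (\<Sum>r<d. \<Sum>x'\<in>I. cc s r * (Q r x' * \<rho> (inv\<^bsub>G\<^esub> g) x' y))" by (rule sum.swap)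
    also have "\<dots> = (\<Sum>r<d. cc s r * (\<Sum>x'\<in>I. Q r x' * \<rho> (inv\<^bsub>G\<^esub> g) x' y))"
      unfolding sum_distrib_left ..
    also have "\<dots> = (\<Sum>r<d. cc s r * (\<chi> r (inv\<^bsub>G\<^esub> g) * Q r y))"
      using eig_E4[OF rep ed _ _ y] g by (intro sum.cong) auto
    finally show ?thesis by (simp add: mult.assoc)
  qed
  let ?T = "\<lambda>g s t r. (P x t * Q r y) * ((\<chi> t g * \<chi> r (inv\<^bsub>G\<^esub> g)) * (\<beta> t s * cc s r))"
  have "(\<Sum>c\<in>reg_idx G n. dfrob G I \<rho> (\<lambda>s z. \<Sum>t<d. P z t * \<beta> t s) x c * frob G I \<rho> (\<lambda>s x. \<Sum>r<d. cc s r * Q r x) c y)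
    = (\<Sum>g\<in>carrier G. \<Sum>s<n. dfrob G I \<rho> (\<lambda>s z. \<Sum>t<d. P z t * \<beta> t s) x (g,s) * frob G I \<rho> (\<lambda>s x. \<Sum>r<d. cc s r * Q r x) (g,s) y)"
    unfolding reg_idx_def sum.cartesian_product by (rule sum.cong) auto
  also have "\<dots> = (\<Sum>g\<in>carrier G. \<Sum>s<n. (\<Sum>t<d. \<chi> t g * P x t * \<beta> t s) * (\<Sum>r<d. cc s r * \<chi> r (inv\<^bsub>G\<^esub> g) * Q r y))"
    using D1 F1 by (intro sum.cong refl) auto
  also have "\<dots> = (\<Sum>g\<in>carrier G. \<Sum>s<n. \<Sum>t<d. \<Sum>r<d. ?T g s t r)"
    unfolding sum_product by (intro sum.cong refl) (simp add: mult_ac)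
  also have "\<dots> = (\<Sum>t<d. \<Sum>r<d. \<Sum>g\<in>carrier G. \<Sum>s<n. ?T g s t r)"
    by (rule swap4)
  also have "\<dots> = (\<Sum>t<d. \<Sum>r<d. P x t * (\<Sum>g\<in>carrier G. \<chi> t g * \<chi> r (inv\<^bsub>G\<^esub> g)) * (\<Sum>s<n. \<beta> t s * cc s r) * Q r y)"
  proof (intro sum.cong refl)
    fix t r
    show "(\<Sum>g\<in>carrier G. \<Sum>s<n. ?T g s t r) = P x t * (\<Sum>g\<in>carrier G. \<chi> t g * \<chi> r (inv\<^bsub>G\<^esub> g)) * (\<Sum>s<n. \<beta> t s * cc s r) * Q r y"
    proof -
      let ?A = "\<Sum>g\<in>carrier G. \<chi> t g * \<chi> r (inv\<^bsub>G\<^esub> g)"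
      let ?B = "\<Sum>s<n. \<beta> t s * cc s r"
      have "P x t * ?A * ?B * Q r y = (P x t * Q r y) * (?A * ?B)" by (simp only: mult_ac)
      also have "?A * ?B = (\<Sum>g\<in>carrier G. \<Sum>s<n. (\<chi> t g * \<chi> r (inv\<^bsub>G\<^esub> g)) * (\<beta> t s * cc s r))"
        by (rule sum_product)
      also have "(P x t * Q r y) * \<dots> = (\<Sum>g\<in>carrier G. \<Sum>s<n. ?T g s t r)"
        by (simp only: sum_distrib_left)
      finally show ?thesis by (rule sym)
    qed
  qed
  finally show ?thesis .
qed



definition flat :: "(nat \<Rightarrow> 'b set) \<Rightarrow> (nat \<Rightarrow> 'b \<Rightarrow> 'k) \<Rightarrow> nat \<Rightarrow> ((nat \<Rightarrow> 'b) \<Rightarrow> 'k::field) \<Rightarrow> nat \<Rightarrow> (nat \<Rightarrow> 'b) \<Rightarrow> 'k" where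
  "flat I Ql l \<omega> r j = (\<Sum>y\<in>I l. Ql r y * \<omega> (j(l:=y)))"

definition cls :: "('g,'c) monoid_scheme \<Rightarrow> nat \<Rightarrow> (nat \<Rightarrow> 'g \<Rightarrow> 'k) \<Rightarrow> nat \<Rightarrow> nat set" where
  "cls G d \<chi> t = {r. r < d \<and> (\<forall>g\<in>carrier G. \<chi> r g = \<chi> t g)}"

lemma cg_group: "comm_group G \<Longrightarrow> group G"
  using comm_group.axioms(2) by blast

lemma constr_factor:
  fixes \<rho> :: "'g \<Rightarrow> 'b \<Rightarrow> 'b \<Rightarrow> 'k::field" and \<omega> :: "(nat \<Rightarrow> 'b) \<Rightarrow> 'k"
  assumes cg: "comm_group G" and fin: "finite (carrier G)" and N: "of_nat (card (carrier G)) \<noteq> (0::'k)"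
    and rep: "is_rep G (I l) \<rho>" and ed: "eigdata G (I l) \<rho> d P Q \<chi>"
    and mr: "\<forall>t<d. mrank_le n (cls G d \<chi> t) (tidx m I) (flat I Q l \<omega>)"
  shows "\<exists>\<alpha> u. \<forall>x\<in>I l. \<forall>j\<in>tidx m I.
     (\<Sum>y\<in>I l. (\<Sum>c\<in>reg_idx G n. dfrob G (I l) \<rho> u x c * frob G (I l) \<rho> \<alpha> c y) * \<omega> (j(l:=y))) = \<omega> (j(l:=x))"
proof -
  have grp: "group G" using cg by (rule cg_group)
  have finI: "finite (I l)" using rep by (rule rep_fin)
  let ?cl = "cls G d \<chi>"
  let ?fl = "flat I Q l \<omega>"
  define N' where "N' = (of_nat (card (carrier G)) :: 'k)"
  define rp where "rp t = (LEAST t'. t' \<in> ?cl t)" for t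
  have selfcl: "t \<in> ?cl t" if "t < d" for t using that unfolding cls_def by auto
  have rpcl: "rp t \<in> ?cl t" if "t < d" for t unfolding rp_def by (rule LeastI[where P="\<lambda>t'. t' \<in> ?cl t", OF selfcl[OF that]])
  have cl_eq: "?cl r = ?cl t" if "r \<in> ?cl t" for r t using that unfolding cls_def by auto
  have rp_eq: "rp r = rp t" if "r \<in> ?cl t" for r t unfolding rp_def using cl_eq[OF that] by simp
  have rpd: "rp t < d" if "t < d" for t using rpcl[OF that] unfolding cls_def by simp
  have "\<forall>t. \<exists>AC. t < d \<longrightarrow> (\<forall>r\<in>?cl t. \<forall>j\<in>tidx m I. ?fl r j = (\<Sum>s<n. fst AC r s * (\<Sum>r'\<in>?cl t. snd AC s r' * ?fl r' j)))"
  proof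
    fix t
    show "\<exists>AC. t < d \<longrightarrow> (\<forall>r\<in>?cl t. \<forall>j\<in>tidx m I. ?fl r j = (\<Sum>s<n. fst AC r s * (\<Sum>r'\<in>?cl t. snd AC s r' * ?fl r' j)))"
    proof (cases "t < d")
      case True
      then obtain A Cm where "\<forall>r\<in>?cl t. \<forall>j\<in>tidx m I. ?fl r j = (\<Sum>s<n. A r s * (\<Sum>r'\<in>?cl t. Cm s r' * ?fl r' j))"
        using mr unfolding mrank_le_def by blast
      then show ?thesis by (intro exI[where x="(A,Cm)"]) simp
    qed simp
  qed
  from choice[OF this] obtain f where f: "\<And>t. t < d \<Longrightarrow> (\<forall>r\<in>?cl t. \<forall>j\<in>tidx m I. ?fl r j = (\<Sum>s<n. fst (f t) r s * (\<Sum>r'\<in>?cl t. snd (f t) s r' * ?fl r' j)))"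
    by blast
  define A where "A t = fst (f t)" for t
  define C where "C t = snd (f t)" for t
  define \<beta> where "\<beta> t s = A (rp t) t s / N'" for t s
  define cc where "cc s r = C (rp r) s r" for s r
  define \<alpha> where "\<alpha> = (\<lambda>s x. \<Sum>r<d. cc s r * Q r x)"
  define u where "u = (\<lambda>s z. \<Sum>t<d. P z t * \<beta> t s)"
  define Om where "Om t r = (\<Sum>g\<in>carrier G. \<chi> t g * \<chi> r (inv\<^bsub>G\<^esub> g))" for t r
  define Bc where "Bc t r = (\<Sum>s<n. \<beta> t s * cc s r)" for t r
  have Oeq: "Om t r = (if r \<in> ?cl t then N' else 0)" if t: "t < d" and r: "r < d" for t r
  proof -
    have "Om t r = (if \<forall>g\<in>carrier G. \<chi> t g = \<chi> r g then N' else 0)"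
      unfolding Om_def N'_def
      by (rule orth[OF cg fin chi_props[OF grp rep ed t] chi_props[OF grp rep ed r]])
    moreover have "(\<forall>g\<in>carrier G. \<chi> t g = \<chi> r g) \<longleftrightarrow> r \<in> ?cl t" using r unfolding cls_def by auto
    ultimately show ?thesis by simp
  qed
  have step2: "(\<Sum>r<d. Om t r * Bc t r * ?fl r j) = ?fl t j" if t: "t < d" and j: "j \<in> tidx m I" for t j
  proof -
    have sub: "?cl t \<subseteq> {..<d}" unfolding cls_def by auto
    have "(\<Sum>r<d. Om t r * Bc t r * ?fl r j) = (\<Sum>r<d. if r \<in> ?cl t then N' * Bc t r * ?fl r j else 0)"
      using Oeq[OF t] by (intro sum.cong) auto
    also have "\<dots> = (\<Sum>r\<in>?cl t. N' * Bc t r * ?fl r j)"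
      by (rule sum_if_subset[OF _ sub]) simp
    also have "\<dots> = (\<Sum>r\<in>?cl t. \<Sum>s<n. A (rp t) t s * (C (rp t) s r * ?fl r j))"
    proof (rule sum.cong[OF refl])
      fix r assume r: "r \<in> ?cl t"
      have "N' * Bc t r = (\<Sum>s<n. A (rp t) t s * C (rp t) s r)"
        unfolding Bc_def \<beta>_def cc_def rp_eq[OF r] sum_distrib_left using N unfolding N'_def
        by (intro sum.cong) auto
      then show "N' * Bc t r * ?fl r j = (\<Sum>s<n. A (rp t) t s * (C (rp t) s r * ?fl r j))"
        by (simp add: sum_distrib_right mult.assoc)
    qed
    also have "\<dots> = (\<Sum>s<n. A (rp t) t s * (\<Sum>r\<in>?cl t. C (rp t) s r * ?fl r j))"
      by (subst sum.swap) (simp add: sum_distrib_left)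
    also have "\<dots> = ?fl t j"
    proof -
      have "t \<in> ?cl (rp t)" using cl_eq[OF rpcl[OF t]] selfcl[OF t] by simp
      from f[OF rpd[OF t], rule_format, OF this j] show ?thesis
        unfolding A_def C_def cl_eq[OF rpcl[OF t]] by simp
    qed
    finally show ?thesis .
  qed
  have main: "(\<Sum>y\<in>I l. (\<Sum>c\<in>reg_idx G n. dfrob G (I l) \<rho> u x c * frob G (I l) \<rho> \<alpha> c y) * \<omega> (j(l:=y))) = \<omega> (j(l:=x))"
    if x: "x \<in> I l" and j: "j \<in> tidx m I" for x j
  proof -
    have "(\<Sum>y\<in>I l. (\<Sum>c\<in>reg_idx G n. dfrob G (I l) \<rho> u x c * frob G (I l) \<rho> \<alpha> c y) * \<omega> (j(l:=y)))
       = (\<Sum>y\<in>I l. (\<Sum>t<d. \<Sum>r<d. P x t * Om t r * Bc t r * Q r y) * \<omega> (j(l:=y)))"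
      unfolding u_def \<alpha>_def Om_def Bc_def using comp_formula[OF grp fin rep ed x] by (intro sum.cong) auto
    also have "\<dots> = (\<Sum>y\<in>I l. \<Sum>t<d. \<Sum>r<d. P x t * (Om t r * Bc t r * (Q r y * \<omega> (j(l:=y)))))"
      unfolding sum_distrib_right by (simp add: mult_ac)
    also have "\<dots> = (\<Sum>t<d. \<Sum>y\<in>I l. \<Sum>r<d. P x t * (Om t r * Bc t r * (Q r y * \<omega> (j(l:=y)))))"
      by (rule sum.swap)
    also have "\<dots> = (\<Sum>t<d. \<Sum>r<d. \<Sum>y\<in>I l. P x t * (Om t r * Bc t r * (Q r y * \<omega> (j(l:=y)))))"
      by (rule sum.cong[OF refl], rule sum.swap)
    also have "\<dots> = (\<Sum>t<d. P x t * (\<Sum>r<d. Om t r * Bc t r * ?fl r j))"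
      unfolding flat_def sum_distrib_left ..
    also have "\<dots> = (\<Sum>t<d. P x t * ?fl t j)"
      using step2 j by (intro sum.cong) auto
    also have "\<dots> = (\<Sum>t<d. \<Sum>y\<in>I l. P x t * (Q t y * \<omega> (j(l:=y))))"
      unfolding flat_def sum_distrib_left ..
    also have "\<dots> = (\<Sum>y\<in>I l. \<Sum>t<d. P x t * (Q t y * \<omega> (j(l:=y))))"
      by (rule sum.swap)
    also have "\<dots> = (\<Sum>y\<in>I l. (\<Sum>t<d. P x t * Q t y) * \<omega> (j(l:=y)))"
      unfolding sum_distrib_right mult.assoc ..
    also have "\<dots> = (\<Sum>y\<in>I l. (if x = y then 1 else 0) * \<omega> (j(l:=y)))"
      using eig_E1[OF ed x] by (intro sum.cong) auto
    also have "\<dots> = \<omega> (j(l:=x))" by (rule delta_left[OF finI x])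
    finally show ?thesis .
  qed
  show ?thesis using main by blast
qed



lemma mat_cong_fun: "(\<And>a b. a < nr \<Longrightarrow> b < nc \<Longrightarrow> f (a,b) = g (a,b)) \<Longrightarrow> mat nr nc f = mat nr nc g"
  by (rule eq_matI) auto

lemma key:
  fixes G :: "('g,'c) monoid_scheme" and I :: "nat \<Rightarrow> 'b set"
    and \<rho> :: "nat \<Rightarrow> 'g \<Rightarrow> 'b \<Rightarrow> 'b \<Rightarrow> 'k::field" and \<omega> :: "(nat \<Rightarrow> 'b) \<Rightarrow> 'k"
    and Ql :: "nat \<Rightarrow> 'b \<Rightarrow> 'k"
  assumes grp: "group G" and fin: "finite (carrier G)" and reps: "\<forall>i<m. is_rep G (I i) (\<rho> i)"
    and l: "l < m" and finS: "finite S" and nmr: "\<not> mrank_le k S (tidx m I) (flat I Ql l \<omega>)"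
    and n: "Suc k \<le> n"
  shows "\<exists>\<phi>. (\<forall>i<m. glin G (I i) (\<rho> i) (reg_idx G n) (reg_rep G) (\<phi> i)) \<and>
           \<not> border_rank_le m (\<lambda>_. reg_idx G n) k (tensor_map m I (\<lambda>_. reg_idx G n) \<phi> \<omega>)"
proof -
  have finI: "\<forall>i<m. finite (I i)" using reps rep_fin by blast
  let ?fl = "flat I Ql l \<omega>"
  obtain L c where cC: "\<forall>b<Suc k. c b \<in> tidx m I"
    and LM: "\<forall>a<Suc k. \<forall>b<Suc k. (\<Sum>r\<in>S. L a r * ?fl r (c b)) = (if a = b then 1 else 0)"
    using dich[OF finS, of k "tidx m I" ?fl] nmr by blast
  define fa where "fa a y = (\<Sum>r\<in>S. L a r * Ql r y)" for a y
  define \<alpha> where "\<alpha> i s x = (if s < Suc k then (if i = l then fa s x else (if x = c s i then 1 else 0)) else 0)" for i s x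
  define \<phi> where "\<phi> i = frob G (I i) (\<rho> i) (\<alpha> i)" for i
  have gl: "\<forall>i<m. glin G (I i) (\<rho> i) (reg_idx G n) (reg_rep G) (\<phi> i)"
    unfolding \<phi>_def using frob_glin[OF grp fin] reps by blast
  define jj where "jj (a::nat) (b::nat) = (\<lambda>i. if i < m then (\<one>\<^bsub>G\<^esub>, if i = l then a else b) else undefined)" for a b
  have jjT: "jj a b \<in> tidx m (\<lambda>_. reg_idx G n)" if "a < Suc k" "b < Suc k" for a b
    using that n grp unfolding jj_def tidx_def reg_idx_def by (auto simp: group.is_monoid monoid.one_closed split: if_splits)
  let ?T = "tensor_map m I (\<lambda>_. reg_idx G n) \<phi> \<omega>"
  have val: "?T (jj a b) = (if a = b then 1 else 0)" if a: "a < Suc k" and b: "b < Suc k" for a b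
  proof -
    have cb: "c b \<in> tidx m I" using cC b by simp
    have "?T (jj a b) = (\<Sum>j\<in>tidx m I. (\<Prod>i<m. \<phi> i (jj a b i) (j i)) * \<omega> j)"
      unfolding tensor_map_def using jjT[OF a b] by simp
    also have "\<dots> = (\<Sum>j\<in>tidx m I. (\<Prod>i<m. if i = l then fa a (j i) else (if j i = c b i then 1 else 0)) * \<omega> j)"
    proof (intro sum.cong refl arg_cong2[where f="(*)"] prod.cong)
      fix j i assume j: "j \<in> tidx m I" and i: "i \<in> {..<m}"
      have ji: "j i \<in> I i" using j i unfolding tidx_def by auto
      have "\<phi> i (jj a b i) (j i) = \<alpha> i (if i = l then a else b) (j i)"
        unfolding \<phi>_def jj_def using i frob_one[OF grp _ ji] reps by auto
      then show "\<phi> i (jj a b i) (j i) = (if i = l then fa a (j i) else (if j i = c b i then 1 else 0))"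
        unfolding \<alpha>_def using a b by auto
    qed
    also have "\<dots> = (\<Sum>y\<in>I l. fa a y * \<omega> ((c b)(l:=y)))"
      by (rule collapse[OF finI l cb])
    also have "\<dots> = (\<Sum>r\<in>S. L a r * ?fl r (c b))"
    proof -
      have "(\<Sum>y\<in>I l. fa a y * \<omega> ((c b)(l:=y))) = (\<Sum>y\<in>I l. \<Sum>r\<in>S. L a r * (Ql r y * \<omega> ((c b)(l:=y))))"
        unfolding fa_def sum_distrib_right mult.assoc ..
      also have "\<dots> = (\<Sum>r\<in>S. \<Sum>y\<in>I l. L a r * (Ql r y * \<omega> ((c b)(l:=y))))" by (rule sum.swap)
      also have "\<dots> = (\<Sum>r\<in>S. L a r * ?fl r (c b))" unfolding flat_def sum_distrib_left ..
      finally show ?thesis .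
    qed
    also have "\<dots> = (if a = b then 1 else 0)" using LM a b by simp
    finally show ?thesis .
  qed
  define p where "p \<tau> = det (mat (Suc k) (Suc k) (\<lambda>(a,b). \<tau> (jj a b)))" for \<tau> :: "(nat \<Rightarrow> 'g \<times> nat) \<Rightarrow> 'k"
  have pp: "p \<in> poly_fun"
  proof -
    have "(\<lambda>\<tau>. det (mat (Suc k) (Suc k) (\<lambda>(a,b). (\<lambda>a b \<tau>. \<tau> (jj a b)) a b \<tau>))) \<in> poly_fun"
      by (rule pf_det) (rule pf_var)
    then show ?thesis unfolding p_def by simp
  qed
  have pvan: "p \<tau> = 0" if r: "rank_le m (\<lambda>_. reg_idx G n) k \<tau>" for \<tau>
  proof -
    obtain v where v: "\<tau> = (\<lambda>j. \<Sum>q<k. pure_tensor m (\<lambda>_. reg_idx G n) (v q) j)"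
      using r unfolding rank_le_def by blast
    have ent: "\<tau> (jj a b) = (\<Sum>q<k. v q l (\<one>\<^bsub>G\<^esub>, a) * (\<Prod>i\<in>{..<m}-{l}. v q i (\<one>\<^bsub>G\<^esub>, b)))"
      if a: "a < Suc k" and b: "b < Suc k" for a b
    proof -
      have "\<tau> (jj a b) = (\<Sum>q<k. \<Prod>i<m. v q i (jj a b i))"
        unfolding v pure_tensor_def using jjT[OF a b] by simp
      also have "\<dots> = (\<Sum>q<k. v q l (\<one>\<^bsub>G\<^esub>, a) * (\<Prod>i\<in>{..<m}-{l}. v q i (\<one>\<^bsub>G\<^esub>, b)))"
      proof (rule sum.cong[OF refl])
        fix q
        have "(\<Prod>i<m. v q i (jj a b i)) = v q l (jj a b l) * (\<Prod>i\<in>{..<m}-{l}. v q i (jj a b i))"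
          using l by (subst prod.remove[of _ l]) auto
        also have "(\<Prod>i\<in>{..<m}-{l}. v q i (jj a b i)) = (\<Prod>i\<in>{..<m}-{l}. v q i (\<one>\<^bsub>G\<^esub>, b))"
          unfolding jj_def by (rule prod.cong) auto
        finally show "(\<Prod>i<m. v q i (jj a b i)) = v q l (\<one>\<^bsub>G\<^esub>, a) * (\<Prod>i\<in>{..<m}-{l}. v q i (\<one>\<^bsub>G\<^esub>, b))"
          unfolding jj_def using l by simp
      qed
      finally show ?thesis .
    qed
    have "p \<tau> = det (mat (Suc k) (Suc k) (\<lambda>(a,b). \<Sum>q<k. (\<lambda>a q. v q l (\<one>\<^bsub>G\<^esub>, a)) a q * (\<lambda>q b. \<Prod>i\<in>{..<m}-{l}. v q i (\<one>\<^bsub>G\<^esub>, b)) q b))"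
      unfolding p_def by (rule arg_cong[where f=det], rule mat_cong_fun) (simp add: ent)
    also have "\<dots> = 0" by (rule det_lowrank)
    finally show ?thesis .
  qed
  have "p ?T = 1"
  proof -
    have "p ?T = det (mat (Suc k) (Suc k) (\<lambda>(a,b). if a = b then 1 else 0))"
      unfolding p_def by (rule arg_cong[where f=det], rule mat_cong_fun) (simp add: val)
    then show ?thesis by (simp add: det_delta)
  qed
  moreover have "p ?T = 0" if b: "border_rank_le m (\<lambda>_. reg_idx G n) k ?T"
  proof -
    have "\<forall>p\<in>poly_fun. (\<forall>s\<in>{\<tau>. rank_le m (\<lambda>_. reg_idx G n) k \<tau>}. p s = 0) \<longrightarrow> p ?T = 0"
      using b unfolding border_rank_le_def zariski_closure_def by (rule CollectD)
    moreover have "\<forall>s\<in>{\<tau>. rank_le m (\<lambda>_. reg_idx G n) k \<tau>}. p s = 0" using pvan by blast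
    ultimately show ?thesis using pp by (meson bspec mp)
  qed
  ultimately have "\<not> border_rank_le m (\<lambda>_. reg_idx G n) k ?T" by auto
  then show ?thesis using gl by blast
qed



theorem lemma3p1:
  fixes G :: "('g, 'c) monoid_scheme"
    and I :: "nat \<Rightarrow> 'b set"
    and \<rho> :: "nat \<Rightarrow> 'g \<Rightarrow> 'b \<Rightarrow> 'b \<Rightarrow> 'k::field"
    and m k n :: nat
  assumes G: "comm_group G" "finite (carrier G)"
    and K_inf: "infinite (UNIV :: 'k set)"
    and K_split: "\<forall>d (\<sigma> :: 'g \<Rightarrow> nat \<Rightarrow> nat \<Rightarrow> 'k). is_rep G {..<d} \<sigma> \<longrightarrow> splits_into_lines G d \<sigma>"
    and reps: "\<forall>i<m. is_rep G (I i) (\<rho> i)"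
    and n: "n \<ge> k + 1"
  shows "(\<forall>\<omega> \<in> tensor_space m I.
           (rank_le m I k \<omega> \<longleftrightarrow>
             (\<forall>\<phi>. (\<forall>i<m. glin G (I i) (\<rho> i) (reg_idx G n) (reg_rep G) (\<phi> i)) \<longrightarrow>
                  rank_le m (\<lambda>_. reg_idx G n) k (tensor_map m I (\<lambda>_. reg_idx G n) \<phi> \<omega>))) \<and>
           (border_rank_le m I k \<omega> \<longleftrightarrow>
             (\<forall>\<phi>. (\<forall>i<m. glin G (I i) (\<rho> i) (reg_idx G n) (reg_rep G) (\<phi> i)) \<longrightarrow>
                  border_rank_le m (\<lambda>_. reg_idx G n) k (tensor_map m I (\<lambda>_. reg_idx G n) \<phi> \<omega>))) \<and>
           (border_rank_le m I k \<omega> \<longrightarrow>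
             (\<exists>\<phi> \<psi>. (\<forall>i<m. glin G (I i) (\<rho> i) (reg_idx G k) (reg_rep G) (\<phi> i)) \<and>
                    (\<forall>i<m. glin G (reg_idx G k) (reg_rep G) (I i) (\<rho> i) (\<psi> i)) \<and>
                    tensor_map m (\<lambda>_. reg_idx G k) I \<psi> (tensor_map m I (\<lambda>_. reg_idx G k) \<phi> \<omega>) = \<omega>)))"
proof -
  have cg: "comm_group G" and fin: "finite (carrier G)" using G by auto
  have grp: "group G" using cg by (rule cg_group)
  have finI: "\<forall>i<m. finite (I i)" using reps rep_fin by blast
  have "\<forall>i. \<exists>D. i < m \<longrightarrow> eigdata G (I i) (\<rho> i) (fst D) (fst (snd D)) (fst (snd (snd D))) (snd (snd (snd D)))"
  proof
    fix i show "\<exists>D. i < m \<longrightarrow> eigdata G (I i) (\<rho> i) (fst D) (fst (snd D)) (fst (snd (snd D))) (snd (snd (snd D)))"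
    proof (cases "i < m")
      case True
      then obtain d P Q \<chi> where "eigdata G (I i) (\<rho> i) d P Q \<chi>"
        using eigen_exists[OF K_split] reps by blast
      then show ?thesis by (intro exI[where x="(d,P,Q,\<chi>)"]) simp
    qed simp
  qed
  from choice[OF this] obtain DD where DD: "\<And>i. i < m \<Longrightarrow> eigdata G (I i) (\<rho> i) (fst (DD i)) (fst (snd (DD i))) (fst (snd (snd (DD i)))) (snd (snd (snd (DD i))))"
    by blast
  define d where "d i = fst (DD i)" for i
  define P where "P i = fst (snd (DD i))" for i
  define Q where "Q i = fst (snd (snd (DD i)))" for i
  define \<chi> where "\<chi> i = snd (snd (snd (DD i)))" for i
  have ed: "\<And>i. i < m \<Longrightarrow> eigdata G (I i) (\<rho> i) (d i) (P i) (Q i) (\<chi> i)"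
    unfolding d_def P_def Q_def \<chi>_def by (rule DD)
  obtain dr Pr Qr \<chi>r where edr: "eigdata G (carrier G) (regrep1 G :: 'g \<Rightarrow> 'g \<Rightarrow> 'g \<Rightarrow> 'k) dr Pr Qr \<chi>r"
    using eigen_exists[OF K_split regrep1_rep[OF grp fin]] by blast
  have N: "of_nat (card (carrier G)) \<noteq> (0::'k)" by (rule card_nonzero[OF grp fin edr])
  define FL where "FL \<omega> n' \<longleftrightarrow> (\<forall>l<m. \<forall>t<d l. mrank_le n' (cls G (d l) (\<chi> l) t) (tidx m I) (flat I (Q l) l \<omega>))"
    for \<omega> :: "(nat \<Rightarrow> 'b) \<Rightarrow> 'k" and n'
  have FLmono: "FL \<omega> n'" if "FL \<omega> k'" "k' \<le> n'" for \<omega> k' n'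
    using that mrank_mono unfolding FL_def by blast
  have lemA: "FL \<omega> k"
    if H: "\<forall>\<phi>. (\<forall>i<m. glin G (I i) (\<rho> i) (reg_idx G n') (reg_rep G) (\<phi> i)) \<longrightarrow>
                  border_rank_le m (\<lambda>_. reg_idx G n') k (tensor_map m I (\<lambda>_. reg_idx G n') \<phi> \<omega>)"
      and n': "Suc k \<le> n'" for \<omega> n'
  proof (rule ccontr)
    assume "\<not> FL \<omega> k"
    then obtain l t where l: "l < m" and "t < d l" and nm: "\<not> mrank_le k (cls G (d l) (\<chi> l) t) (tidx m I) (flat I (Q l) l \<omega>)"
      unfolding FL_def by blast
    have "finite (cls G (d l) (\<chi> l) t)" unfolding cls_def by simp
    from key[OF grp fin reps l this nm n'] H show False by blast
  qed
  have lemB: "\<exists>\<phi> \<psi>. (\<forall>i<m. glin G (I i) (\<rho> i) (reg_idx G n') (reg_rep G) (\<phi> i)) \<and>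
                    (\<forall>i<m. glin G (reg_idx G n') (reg_rep G) (I i) (\<rho> i) (\<psi> i)) \<and>
                    tensor_map m (\<lambda>_. reg_idx G n') I \<psi> (tensor_map m I (\<lambda>_. reg_idx G n') \<phi> \<omega>) = \<omega>"
    if w: "\<omega> \<in> tensor_space m I" and fl: "FL \<omega> n'" for \<omega> n'
  proof -
    have "\<forall>l. \<exists>au. l < m \<longrightarrow> (\<forall>x\<in>I l. \<forall>j\<in>tidx m I.
       (\<Sum>y\<in>I l. (\<Sum>c\<in>reg_idx G n'. dfrob G (I l) (\<rho> l) (snd au) x c * frob G (I l) (\<rho> l) (fst au) c y) * \<omega> (j(l:=y))) = \<omega> (j(l:=x)))"
    proof
      fix l show "\<exists>au. l < m \<longrightarrow> (\<forall>x\<in>I l. \<forall>j\<in>tidx m I.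
       (\<Sum>y\<in>I l. (\<Sum>c\<in>reg_idx G n'. dfrob G (I l) (\<rho> l) (snd au) x c * frob G (I l) (\<rho> l) (fst au) c y) * \<omega> (j(l:=y))) = \<omega> (j(l:=x)))"
      proof (cases "l < m")
        case True
        have "\<forall>t<d l. mrank_le n' (cls G (d l) (\<chi> l) t) (tidx m I) (flat I (Q l) l \<omega>)"
          using fl True unfolding FL_def by blast
        from constr_factor[OF cg fin N reps[rule_format, OF True] ed[OF True] this]
        obtain \<alpha> u where "\<forall>x\<in>I l. \<forall>j\<in>tidx m I.
          (\<Sum>y\<in>I l. (\<Sum>c\<in>reg_idx G n'. dfrob G (I l) (\<rho> l) u x c * frob G (I l) (\<rho> l) \<alpha> c y) * \<omega> (j(l:=y))) = \<omega> (j(l:=x))"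
          by blast
        then show ?thesis by (intro exI[where x="(\<alpha>,u)"]) simp
      qed simp
    qed
    from choice[OF this] obtain au where au: "\<And>l x j. l < m \<Longrightarrow> x \<in> I l \<Longrightarrow> j \<in> tidx m I \<Longrightarrow>
       (\<Sum>y\<in>I l. (\<Sum>c\<in>reg_idx G n'. dfrob G (I l) (\<rho> l) (snd (au l)) x c * frob G (I l) (\<rho> l) (fst (au l)) c y) * \<omega> (j(l:=y))) = \<omega> (j(l:=x))"
      by blast
    define \<phi> where "\<phi> i = frob G (I i) (\<rho> i) (fst (au i))" for i
    define \<psi> where "\<psi> i = dfrob G (I i) (\<rho> i) (snd (au i))" for i
    have g1: "\<forall>i<m. glin G (I i) (\<rho> i) (reg_idx G n') (reg_rep G) (\<phi> i)"
      unfolding \<phi>_def using frob_glin[OF grp fin] reps by blast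
    have g2: "\<forall>i<m. glin G (reg_idx G n') (reg_rep G) (I i) (\<rho> i) (\<psi> i)"
      unfolding \<psi>_def using dfrob_glin[OF grp fin] reps by blast
    have finR: "\<forall>i<m. finite (reg_idx G n')" using fin unfolding reg_idx_def by simp
    define E where "E i b a = (\<Sum>c\<in>reg_idx G n'. \<psi> i b c * \<phi> i c a)" for i b a
    have "tensor_map m (\<lambda>_. reg_idx G n') I \<psi> (tensor_map m I (\<lambda>_. reg_idx G n') \<phi> \<omega>) = tensor_map m I I E \<omega>"
      unfolding E_def by (rule tm_comp[OF finI finR])
    also have "\<dots> = \<omega>"
    proof (rule tm_fix[OF finI w], intro allI impI)
      fix l assume l: "l < m"
      show "tensor_map m I I (\<lambda>i. if i = l then E l else delta) \<omega> = \<omega>"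
      proof
        fix x show "tensor_map m I I (\<lambda>i. if i = l then E l else delta) \<omega> x = \<omega> x"
        proof (cases "x \<in> tidx m I")
          case True
          have xl: "x l \<in> I l" using True l unfolding tidx_def by auto
          have "tensor_map m I I (\<lambda>i. if i = l then E l else delta) \<omega> x = (\<Sum>y\<in>I l. E l (x l) y * \<omega> (x(l:=y)))"
            by (rule tm_single[OF finI l True])
          also have "\<dots> = \<omega> (x(l := x l))"
            using au[OF l xl True] unfolding E_def \<phi>_def \<psi>_def .
          finally show ?thesis by simp
        next
          case False
          then show ?thesis using w unfolding tensor_map_def tensor_space_def by simp
        qed
      qed
    qed
    finally show ?thesis using g1 g2 by blast
  qed
  show ?thesis
  proof (intro ballI conjI)
    fix \<omega> :: "(nat \<Rightarrow> 'b) \<Rightarrow> 'k" assume w: "\<omega> \<in> tensor_space m I"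
    show "rank_le m I k \<omega> \<longleftrightarrow>
             (\<forall>\<phi>. (\<forall>i<m. glin G (I i) (\<rho> i) (reg_idx G n) (reg_rep G) (\<phi> i)) \<longrightarrow>
                  rank_le m (\<lambda>_. reg_idx G n) k (tensor_map m I (\<lambda>_. reg_idx G n) \<phi> \<omega>))"
    proof
      assume "rank_le m I k \<omega>"
      then show "\<forall>\<phi>. (\<forall>i<m. glin G (I i) (\<rho> i) (reg_idx G n) (reg_rep G) (\<phi> i)) \<longrightarrow>
                  rank_le m (\<lambda>_. reg_idx G n) k (tensor_map m I (\<lambda>_. reg_idx G n) \<phi> \<omega>)"
        using rank_mono[OF finI] by blast
    next
      assume H: "\<forall>\<phi>. (\<forall>i<m. glin G (I i) (\<rho> i) (reg_idx G n) (reg_rep G) (\<phi> i)) \<longrightarrow>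
                  rank_le m (\<lambda>_. reg_idx G n) k (tensor_map m I (\<lambda>_. reg_idx G n) \<phi> \<omega>)"
      then have "\<forall>\<phi>. (\<forall>i<m. glin G (I i) (\<rho> i) (reg_idx G n) (reg_rep G) (\<phi> i)) \<longrightarrow>
                  border_rank_le m (\<lambda>_. reg_idx G n) k (tensor_map m I (\<lambda>_. reg_idx G n) \<phi> \<omega>)"
        using rank_border by blast
      then have "FL \<omega> k" using lemA n by simp
      then have "FL \<omega> n" using FLmono n by simp
      then obtain \<phi> \<psi> where g1: "\<forall>i<m. glin G (I i) (\<rho> i) (reg_idx G n) (reg_rep G) (\<phi> i)"
        and eq: "tensor_map m (\<lambda>_. reg_idx G n) I \<psi> (tensor_map m I (\<lambda>_. reg_idx G n) \<phi> \<omega>) = \<omega>"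
        using lemB[OF w] by blast
      have "rank_le m (\<lambda>_. reg_idx G n) k (tensor_map m I (\<lambda>_. reg_idx G n) \<phi> \<omega>)" using H g1 by blast
      then have "rank_le m I k (tensor_map m (\<lambda>_. reg_idx G n) I \<psi> (tensor_map m I (\<lambda>_. reg_idx G n) \<phi> \<omega>))"
        by (rule rank_mono[rotated]) (use fin in \<open>simp add: reg_idx_def\<close>)
      then show "rank_le m I k \<omega>" unfolding eq .
    qed
  next
    fix \<omega> :: "(nat \<Rightarrow> 'b) \<Rightarrow> 'k" assume w: "\<omega> \<in> tensor_space m I"
    show "border_rank_le m I k \<omega> \<longleftrightarrow>
             (\<forall>\<phi>. (\<forall>i<m. glin G (I i) (\<rho> i) (reg_idx G n) (reg_rep G) (\<phi> i)) \<longrightarrow>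
                  border_rank_le m (\<lambda>_. reg_idx G n) k (tensor_map m I (\<lambda>_. reg_idx G n) \<phi> \<omega>))"
    proof
      assume "border_rank_le m I k \<omega>"
      then show "\<forall>\<phi>. (\<forall>i<m. glin G (I i) (\<rho> i) (reg_idx G n) (reg_rep G) (\<phi> i)) \<longrightarrow>
                  border_rank_le m (\<lambda>_. reg_idx G n) k (tensor_map m I (\<lambda>_. reg_idx G n) \<phi> \<omega>)"
        using border_mono[OF finI] by blast
    next
      assume H: "\<forall>\<phi>. (\<forall>i<m. glin G (I i) (\<rho> i) (reg_idx G n) (reg_rep G) (\<phi> i)) \<longrightarrow>
                  border_rank_le m (\<lambda>_. reg_idx G n) k (tensor_map m I (\<lambda>_. reg_idx G n) \<phi> \<omega>)"
      then have "FL \<omega> k" using lemA n by simp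
      then have "FL \<omega> n" using FLmono n by simp
      then obtain \<phi> \<psi> where g1: "\<forall>i<m. glin G (I i) (\<rho> i) (reg_idx G n) (reg_rep G) (\<phi> i)"
        and eq: "tensor_map m (\<lambda>_. reg_idx G n) I \<psi> (tensor_map m I (\<lambda>_. reg_idx G n) \<phi> \<omega>) = \<omega>"
        using lemB[OF w] by blast
      have "border_rank_le m (\<lambda>_. reg_idx G n) k (tensor_map m I (\<lambda>_. reg_idx G n) \<phi> \<omega>)" using H g1 by blast
      then have "border_rank_le m I k (tensor_map m (\<lambda>_. reg_idx G n) I \<psi> (tensor_map m I (\<lambda>_. reg_idx G n) \<phi> \<omega>))"
        by (rule border_mono[rotated]) (use fin in \<open>simp add: reg_idx_def\<close>)
      then show "border_rank_le m I k \<omega>" unfolding eq .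
    qed
  next
    fix \<omega> :: "(nat \<Rightarrow> 'b) \<Rightarrow> 'k" assume w: "\<omega> \<in> tensor_space m I"
    show "border_rank_le m I k \<omega> \<longrightarrow>
             (\<exists>\<phi> \<psi>. (\<forall>i<m. glin G (I i) (\<rho> i) (reg_idx G k) (reg_rep G) (\<phi> i)) \<and>
                    (\<forall>i<m. glin G (reg_idx G k) (reg_rep G) (I i) (\<rho> i) (\<psi> i)) \<and>
                    tensor_map m (\<lambda>_. reg_idx G k) I \<psi> (tensor_map m I (\<lambda>_. reg_idx G k) \<phi> \<omega>) = \<omega>)"
    proof
      assume b: "border_rank_le m I k \<omega>"
      have "\<forall>\<phi>. (\<forall>i<m. glin G (I i) (\<rho> i) (reg_idx G (Suc k)) (reg_rep G) (\<phi> i)) \<longrightarrow>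
                  border_rank_le m (\<lambda>_. reg_idx G (Suc k)) k (tensor_map m I (\<lambda>_. reg_idx G (Suc k)) \<phi> \<omega>)"
        using border_mono[OF finI b] by blast
      then have "FL \<omega> k" using lemA by simp
      then show "\<exists>\<phi> \<psi>. (\<forall>i<m. glin G (I i) (\<rho> i) (reg_idx G k) (reg_rep G) (\<phi> i)) \<and>
                    (\<forall>i<m. glin G (reg_idx G k) (reg_rep G) (I i) (\<rho> i) (\<psi> i)) \<and>
                    tensor_map m (\<lambda>_. reg_idx G k) I \<psi> (tensor_map m I (\<lambda>_. reg_idx G k) \<phi> \<omega>) = \<omega>"
        by (rule lemB[OF w])
    qed
  qed
qed


end
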